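(* Take $p\in [1,\infty)$ and $0<\alpha\le1$. Let $\Omega\subset \mathbb{R}^N$ be a bounded domain with boundary $\Gamma$ of class $C^2$. If $v\in\Sigma_\alpha(\Omega)$, then \[ \max_{\Gamma} v - \min_{\Gamma} v \le K\, [v]_{\alpha,\Omega}^{ \frac{N}{N+ \alpha \, p} } \, \Vert v-v_{\Omega}\Vert_{p, \Omega}^\frac{\alpha p}{N+ \alpha p} \] for some optimal constant $K$. Moreover, \[ K\le \max\left[ 2 \left( 1 +\frac{ \alpha p}{N} \right) ,\left(\frac{d_\Omega}{r_i}\right)^\alpha\right]\left( \frac{N}{\alpha p}\right)^{\frac{\alpha p}{N+ \alpha p}}\,\left( \frac{C}{c} \right)^\frac{\alpha N}{N+\alpha p}. \]
   Context: Let $N\ge 2$. Let $A(x)$ be a symmetric $N\times N$ matrix with measurable entries satisfying $\lambda|\xi|^2\le\langle A(x)\xi,\xi\rangle\le\Lambda|\xi|^2$ for all $x$ and $\xi\in\mathbb{R}^N$, with $\lambda,\Lambda>0$, and let $Lv=\mathrm{div}[A(x)\nabla v]$. For the bounded domain $\Omega$ with diameter $d_\Omega$: $\Vert v\Vert_{p,\Omega}$ is the $L^p$-norm of $v$ with respect to the normalized measure $dx/|\Omega|$; $v_\Omega$ is the mean value of $v$ on $\Omega$; $[v]_{\alpha,\Omega}=\sup\{(d_\Omega/2)^\alpha|v(x_1)-v(x_2)|/|x_1-x_2|^\alpha : x_1,x_2\in\overline\Omega,\ x_1\ne x_2\}$; and $\Sigma_\alpha(\Omega)$ is the set of weak solutions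 $v\in C^{0,\alpha}(\overline\Omega)$ of $Lv=0$ in $\Omega$. $r_i>0$ is the radius of the uniform interior sphere condition: for each $z\in\Gamma$ there is a ball of radius $r_i$ contained in $\Omega$ whose closure meets $\Gamma$ only at $z$. The constants $c\le C$, depending only on $N,\lambda,\Lambda$, are those of the mean value property for $L$ (Caffarelli; Blank–Hao): for $x_0\in\Omega$ and $0<r<r_0$ with $r_0\ge\mathrm{dist}(x_0,\Gamma)/C$ there are increasing domains $D_r(x_0)$ with $B_{cr}(x_0)\subset D_r(x_0)\subset B_{Cr}(x_0)$ such that every $v$ with $Lv\ge0$ satisfies $v(x_0)\le |D_r(x_0)|^{-1}\int_{D_r(x_0)}v\le |D_\rho(x_0)|^{-1}\int_{D_\rho(x_0)}v$ for $0<r<\rho<r_0$. *)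

theory Defs
  imports "HOL-Analysis.Analysis"
begin

definition pd :: "'n::finite \<Rightarrow> (real^'n \<Rightarrow> real) \<Rightarrow> real^'n \<Rightarrow> real" where
  "pd i f x = deriv (\<lambda>t. f (x + t *\<^sub>R axis i 1)) 0"

fun iter_pd :: "'n::finite list \<Rightarrow> (real^'n \<Rightarrow> real) \<Rightarrow> real^'n \<Rightarrow> real" where
  "iter_pd [] f = f"
| "iter_pd (i # is) f = pd i (iter_pd is f)"

definition smooth :: "(real^'n::finite \<Rightarrow> real) \<Rightarrow> bool" where
  "smooth f \<longleftrightarrow> (\<forall>is. continuous_on UNIV (iter_pd is f) \<and>
      (\<forall>i x. (\<lambda>t. iter_pd is f (x + t *\<^sub>R axis i 1)) differentiable (at 0)))"

definition grad :: "(real^'n::finite \<Rightarrow> real) \<Rightarrow> real^'n \<Rightarrow> real^'n" where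
  "grad f x = (\<chi> i. pd i f x)"

definition test_fun :: "(real^'n::finite) set \<Rightarrow> (real^'n \<Rightarrow> real) \<Rightarrow> bool" where
  "test_fun \<Omega> \<phi> \<longleftrightarrow> smooth \<phi> \<and> compact (closure {x. \<phi> x \<noteq> 0}) \<and> closure {x. \<phi> x \<noteq> 0} \<subseteq> \<Omega>"

definition L2_loc :: "(real^'n::finite) set \<Rightarrow> (real^'n \<Rightarrow> real) \<Rightarrow> bool" where
  "L2_loc \<Omega> f \<longleftrightarrow> (\<forall>K. compact K \<and> K \<subseteq> \<Omega> \<longrightarrow>
      set_integrable lebesgue K f \<and> set_integrable lebesgue K (\<lambda>x. (f x)\<^sup>2))"

definition H1_loc_grad :: "(real^'n::finite) set \<Rightarrow> (real^'n \<Rightarrow> real) \<Rightarrow> (real^'n \<Rightarrow> real^'n) \<Rightarrow> bool" where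
  "H1_loc_grad \<Omega> v g \<longleftrightarrow> L2_loc \<Omega> v \<and> (\<forall>i. L2_loc \<Omega> (\<lambda>x. g x $ i)) \<and>
     (\<forall>\<phi> i. test_fun \<Omega> \<phi> \<longrightarrow>
        (LINT x:\<Omega>|lebesgue. v x * pd i \<phi> x) = - (LINT x:\<Omega>|lebesgue. g x $ i * \<phi> x))"

text \<open>Weak solutions of L v = div(A grad v) = 0 and weak subsolutions (L v \<ge> 0).\<close>
definition weak_solution :: "(real^'n::finite \<Rightarrow> real^'n^'n) \<Rightarrow> (real^'n) set \<Rightarrow> (real^'n \<Rightarrow> real) \<Rightarrow> bool" where
  "weak_solution A \<Omega> v \<longleftrightarrow> (\<exists>g. H1_loc_grad \<Omega> v g \<and>
     (\<forall>\<phi>. test_fun \<Omega> \<phi> \<longrightarrow> (LINT x:\<Omega>|lebesgue. (A x *v g x) \<bullet> grad \<phi> x) = 0))"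

definition weak_subsolution :: "(real^'n::finite \<Rightarrow> real^'n^'n) \<Rightarrow> (real^'n) set \<Rightarrow> (real^'n \<Rightarrow> real) \<Rightarrow> bool" where
  "weak_subsolution A \<Omega> v \<longleftrightarrow> (\<exists>g. H1_loc_grad \<Omega> v g \<and>
     (\<forall>\<phi>. test_fun \<Omega> \<phi> \<and> (\<forall>x. \<phi> x \<ge> 0) \<longrightarrow> (LINT x:\<Omega>|lebesgue. (A x *v g x) \<bullet> grad \<phi> x) \<le> 0))"

definition elliptic_coeffs :: "(real^'n::finite \<Rightarrow> real^'n^'n) \<Rightarrow> real \<Rightarrow> real \<Rightarrow> bool" where
  "elliptic_coeffs A lam Lam \<longleftrightarrow> 0 < lam \<and> 0 < Lam \<and>
     (\<forall>i j. (\<lambda>x. A x $ i $ j) \<in> borel_measurable lebesgue) \<and>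
     (\<forall>x. transpose (A x) = A x) \<and>
     (\<forall>x \<xi>. lam * (norm \<xi>)\<^sup>2 \<le> \<xi> \<bullet> (A x *v \<xi>) \<and> \<xi> \<bullet> (A x *v \<xi>) \<le> Lam * (norm \<xi>)\<^sup>2)"

definition bounded_domain :: "(real^'n::finite) set \<Rightarrow> bool" where
  "bounded_domain \<Omega> \<longleftrightarrow> open \<Omega> \<and> connected \<Omega> \<and> bounded \<Omega> \<and> \<Omega> \<noteq> {}"

definition C2_on :: "(real^'n::finite) set \<Rightarrow> (real^'n \<Rightarrow> real) \<Rightarrow> (real^'n \<Rightarrow> real^'n) \<Rightarrow> bool" where
  "C2_on U \<rho> g \<longleftrightarrow> (\<exists>H :: real^'n \<Rightarrow> real^'n^'n.
     (\<forall>x\<in>U. (\<rho> has_derivative (\<lambda>h. g x \<bullet> h)) (at x) \<and> (g has_derivative (\<lambda>h. H x *v h)) (at x))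
     \<and> continuous_on U H)"

definition C2_boundary :: "(real^'n::finite) set \<Rightarrow> bool" where
  "C2_boundary \<Omega> \<longleftrightarrow> (\<forall>z\<in>frontier \<Omega>. \<exists>U \<rho> g. open U \<and> z \<in> U \<and> C2_on U \<rho> g \<and>
      (\<forall>x\<in>U. g x \<noteq> 0) \<and> \<Omega> \<inter> U = {x\<in>U. \<rho> x < 0})"

definition interior_sphere_radius :: "(real^'n::finite) set \<Rightarrow> real \<Rightarrow> bool" where
  "interior_sphere_radius \<Omega> r \<longleftrightarrow> 0 < r \<and>
     (\<forall>z\<in>frontier \<Omega>. \<exists>y. ball y r \<subseteq> \<Omega> \<and> closure (ball y r) \<inter> frontier \<Omega> = {z})"

definition avg :: "(real^'n::finite) set \<Rightarrow> (real^'n \<Rightarrow> real) \<Rightarrow> real" where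
  "avg D w = (LINT x:D|lebesgue. w x) / measure lebesgue D"

definition nLp_norm :: "real \<Rightarrow> (real^'n::finite) set \<Rightarrow> (real^'n \<Rightarrow> real) \<Rightarrow> real" where
  "nLp_norm p \<Omega> w = ((LINT x:\<Omega>|lebesgue. \<bar>w x\<bar> powr p) / measure lebesgue \<Omega>) powr (1 / p)"

definition holder_on :: "real \<Rightarrow> (real^'n::finite) set \<Rightarrow> (real^'n \<Rightarrow> real) \<Rightarrow> bool" where
  "holder_on \<alpha> S v \<longleftrightarrow> continuous_on S v \<and>
     (\<exists>M. \<forall>x\<in>S. \<forall>y\<in>S. \<bar>v x - v y\<bar> \<le> M * dist x y powr \<alpha>)"

definition holder_seminorm :: "real \<Rightarrow> (real^'n::finite) set \<Rightarrow> (real^'n \<Rightarrow> real) \<Rightarrow> real" where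
  "holder_seminorm \<alpha> \<Omega> v = Sup {(diameter \<Omega> / 2) powr \<alpha> * \<bar>v x1 - v x2\<bar> / dist x1 x2 powr \<alpha> | x1 x2.
      x1 \<in> closure \<Omega> \<and> x2 \<in> closure \<Omega> \<and> x1 \<noteq> x2}"

definition Sigma_set :: "(real^'n::finite \<Rightarrow> real^'n^'n) \<Rightarrow> real \<Rightarrow> (real^'n) set \<Rightarrow> (real^'n \<Rightarrow> real) set" where
  "Sigma_set A \<alpha> \<Omega> = {v. holder_on \<alpha> (closure \<Omega>) v \<and> weak_solution A \<Omega> v}"

section \<open>Mean value property (Caffarelli; Blank--Hao) with constants c \<le> C\<close>

definition mean_value_property ::
  "(real^'n::finite \<Rightarrow> real^'n^'n) \<Rightarrow> (real^'n) set \<Rightarrow> real \<Rightarrow> real \<Rightarrow> bool" where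
  "mean_value_property A \<Omega> c C \<longleftrightarrow> 0 < c \<and> c \<le> C \<and>
    (\<forall>x0\<in>\<Omega>. \<exists>D :: real \<Rightarrow> (real^'n) set.
       (\<forall>r. 0 < r \<and> r < infdist x0 (frontier \<Omega>) / C \<longrightarrow>
            D r \<in> sets lebesgue \<and> ball x0 (c * r) \<subseteq> D r \<and> D r \<subseteq> ball x0 (C * r)) \<and>
       (\<forall>r \<rho>. 0 < r \<and> r < \<rho> \<and> \<rho> < infdist x0 (frontier \<Omega>) / C \<longrightarrow> D r \<subseteq> D \<rho>) \<and>
       (\<forall>w. continuous_on \<Omega> w \<and> weak_subsolution A \<Omega> w \<longrightarrow>
          (\<forall>r \<rho>. 0 < r \<and> r < \<rho> \<and> \<rho> < infdist x0 (frontier \<Omega>) / C \<longrightarrow>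
             w x0 \<le> avg (D r) w \<and> avg (D r) w \<le> avg (D \<rho>) w)))"

end

theory Submission
  imports Defs "HOL-Analysis.Analysis"
begin

definition mids :: "'a::euclidean_space set \<Rightarrow> 'a set \<Rightarrow> 'a set" where
  "mids S T = (\<lambda>(x,y). (1/2) *\<^sub>R (x + y)) ` (S \<times> T)"

definition boxfam :: "'a::euclidean_space set set \<Rightarrow> bool" where
  "boxfam F \<longleftrightarrow> finite F \<and> (\<forall>X\<in>F. \<exists>a b. X = cbox a b \<and> box a b \<noteq> {}) \<and>
     (\<forall>X\<in>F. \<forall>Y\<in>F. X \<noteq> Y \<longrightarrow> interior X \<inter> interior Y = {})"

lemma boxfamD:
  assumes "boxfam F"
  shows "finite F" "\<And>X. X \<in> F \<Longrightarrow> \<exists>a b. X = cbox a b \<and> box a b \<noteq> {}"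
    "\<And>X Y. X \<in> F \<Longrightarrow> Y \<in> F \<Longrightarrow> X \<noteq> Y \<Longrightarrow> interior X \<inter> interior Y = {}"
  using assms unfolding boxfam_def by simp_all

lemma boxfamI:
  assumes "finite F" "\<And>X. X \<in> F \<Longrightarrow> \<exists>a b. X = cbox a b \<and> box a b \<noteq> {}"
    "\<And>X Y. X \<in> F \<Longrightarrow> Y \<in> F \<Longrightarrow> X \<noteq> Y \<Longrightarrow> interior X \<inter> interior Y = {}"
  shows "boxfam F"
  using assms unfolding boxfam_def by simp

lemma mids_iff: "z \<in> mids S T \<longleftrightarrow> (\<exists>x\<in>S. \<exists>y\<in>T. z = (1/2) *\<^sub>R (x + y))"
  unfolding mids_def by force

lemma mids_commute: "mids S T = mids T S"
  unfolding mids_iff set_eq_iff by (metis add.commute)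

lemma mids_mono: "S \<subseteq> S' \<Longrightarrow> T \<subseteq> T' \<Longrightarrow> mids S T \<subseteq> mids S' T'"
  unfolding mids_def by auto

lemma compact_mids: "compact S \<Longrightarrow> compact T \<Longrightarrow> compact (mids S T)"
proof -
  assume "compact S" "compact T"
  hence "compact (S \<times> T)" by (rule compact_Times)
  moreover have "continuous_on (S \<times> T) (\<lambda>(x,y). (1/2) *\<^sub>R (x + y))"
    unfolding case_prod_unfold by (intro continuous_intros)
  ultimately show ?thesis unfolding mids_def by (rule compact_continuous_image[rotated])
qed

lemma boxfam_compact: "boxfam F \<Longrightarrow> compact (\<Union>F)"
  by (rule compact_Union) (auto dest: boxfamD)

lemma box_sep:
  fixes a b a' b' :: "'a::euclidean_space"
  assumes "box a b \<noteq> {}" "box a' b' \<noteq> {}" "box a b \<inter> box a' b' = {}"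
  shows "\<exists>k\<in>Basis. b\<bullet>k \<le> a'\<bullet>k \<or> b'\<bullet>k \<le> a\<bullet>k"
proof (rule ccontr)
  assume "\<not> ?thesis"
  hence h: "\<And>k. k \<in> Basis \<Longrightarrow> a'\<bullet>k < b\<bullet>k \<and> a\<bullet>k < b'\<bullet>k" by force
  have h2: "\<And>k. k \<in> Basis \<Longrightarrow> a\<bullet>k < b\<bullet>k \<and> a'\<bullet>k < b'\<bullet>k"
    using assms(1,2) by (auto simp: box_ne_empty)
  define z where "z = (\<Sum>k\<in>Basis. ((max (a\<bullet>k) (a'\<bullet>k) + min (b\<bullet>k) (b'\<bullet>k))/2) *\<^sub>R k)"
  have zk: "z\<bullet>k = (max (a\<bullet>k) (a'\<bullet>k) + min (b\<bullet>k) (b'\<bullet>k))/2" if "k \<in> Basis" for k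
    unfolding z_def using that by (simp add: inner_sum_left inner_Basis if_distrib cong: if_cong)
  have "a\<bullet>k < z\<bullet>k \<and> z\<bullet>k < b\<bullet>k \<and> a'\<bullet>k < z\<bullet>k \<and> z\<bullet>k < b'\<bullet>k" if "k \<in> Basis" for k
    using h[OF that] h2[OF that] zk[OF that] by (simp add: max_def min_def split: if_splits)
  hence "z \<in> box a b \<inter> box a' b'" by (simp add: mem_box)
  with assms(3) show False by auto
qed

lemma cbox_inter_negligible:
  fixes X Y :: "'a::euclidean_space set"
  assumes "\<exists>a b. X = cbox a b" "\<exists>a b. Y = cbox a b" "interior X \<inter> interior Y = {}"
  shows "negligible (X \<inter> Y)"
proof -
  obtain a b a' b' where X: "X = cbox a b" and Y: "Y = cbox a' b'" using assms by blast
  obtain p q where pq: "X \<inter> Y = cbox p q" unfolding X Y Int_interval by blast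
  have "interior (cbox p q) = {}" using assms(3) pq by (metis interior_Int)
  hence "box p q = {}" by simp
  thus ?thesis using pq negligible_interval(1)[of p q] by simp
qed

definition upH :: "'a::euclidean_space \<Rightarrow> real \<Rightarrow> 'a set" where "upH k c = {x. c \<le> x\<bullet>k}"
definition loH :: "'a::euclidean_space \<Rightarrow> real \<Rightarrow> 'a set" where "loH k c = {x. x\<bullet>k \<le> c}"

definition splitfam :: "'a::euclidean_space set set \<Rightarrow> 'a set \<Rightarrow> 'a set set" where
  "splitfam F H = (\<lambda>X. X \<inter> H) ` {X\<in>F. interior (X \<inter> H) \<noteq> {}}"

lemma closed_lebesgue: "closed (T::'a::euclidean_space set) \<Longrightarrow> T \<in> sets lebesgue"
  using lebesgue_closedin[of UNIV T] by simp

lemma closed_upH: "closed (upH k c)" unfolding upH_def by (simp add: closed_Collect_le continuous_on_inner continuous_on_const continuous_on_id)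
lemma closed_loH: "closed (loH k c)" unfolding loH_def by (simp add: closed_Collect_le continuous_on_inner continuous_on_const continuous_on_id)

lemma cbox_Int_H:
  assumes "k \<in> Basis" "H = upH k c \<or> H = loH k c"
  shows "\<exists>a' b'. cbox a b \<inter> H = cbox a' b'"
  using assms(2)
proof
  assume "H = upH k c" thus ?thesis using interval_split(2)[OF assms(1), of a b c] unfolding upH_def by blast
next
  assume "H = loH k c" thus ?thesis using interval_split(1)[OF assms(1), of a b c] unfolding loH_def by blast
qed

lemma boxfam_split:
  assumes "boxfam F" "k \<in> Basis" "H = upH k c \<or> H = loH k c"
  shows "boxfam (splitfam F H)"
proof -
  have fin: "finite (splitfam F H)" using boxfamD(1)[OF assms(1)] unfolding splitfam_def by simp
  have bx: "\<exists>a b. Y = cbox a b \<and> box a b \<noteq> {}" if Y: "Y \<in> splitfam F H" for Y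
  proof -
    obtain X where X: "X \<in> F" "interior (X \<inter> H) \<noteq> {}" "Y = X \<inter> H" using Y unfolding splitfam_def by blast
    obtain a b where ab: "X = cbox a b" using boxfamD(2)[OF assms(1) X(1)] by blast
    obtain a' b' where "cbox a b \<inter> H = cbox a' b'" using cbox_Int_H[OF assms(2,3)] by blast
    hence "Y = cbox a' b'" using ab X(3) by simp
    thus ?thesis using X(2) X(3) by auto
  qed
  have dj: "interior Y \<inter> interior Z = {}" if YZ: "Y \<in> splitfam F H" "Z \<in> splitfam F H" "Y \<noteq> Z" for Y Z
  proof -
    obtain X where X: "X \<in> F" "Y = X \<inter> H" using YZ unfolding splitfam_def by blast
    obtain X' where X': "X' \<in> F" "Z = X' \<inter> H" using YZ unfolding splitfam_def by blast
    have "X \<noteq> X'" using X X' YZ(3) by auto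
    hence "interior X \<inter> interior X' = {}" using boxfamD(3)[OF assms(1) X(1) X'(1)] by blast
    moreover have "interior Y \<subseteq> interior X" "interior Z \<subseteq> interior X'" using X X' by (auto intro: interior_mono)
    ultimately show ?thesis by blast
  qed
  show ?thesis using fin bx dj by (intro boxfamI) blast+
qed

lemma card_split_le:
  assumes "boxfam F"
  shows "card (splitfam F H) \<le> card F"
proof -
  have "finite F" using boxfamD(1)[OF assms(1)] .
  hence "card (splitfam F H) \<le> card {X\<in>F. interior (X \<inter> H) \<noteq> {}}"
    unfolding splitfam_def by (intro card_image_le) auto
  also have "\<dots> \<le> card F" using \<open>finite F\<close> by (intro card_mono) auto
  finally show ?thesis .
qed

lemma card_split_less:
  assumes "boxfam F" "X \<in> F" "interior (X \<inter> H) = {}"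
  shows "card (splitfam F H) < card F"
proof -
  have fin: "finite F" using boxfamD(1)[OF assms(1)] .
  have "card (splitfam F H) \<le> card {X\<in>F. interior (X \<inter> H) \<noteq> {}}"
    unfolding splitfam_def using fin by (intro card_image_le) auto
  also have "\<dots> < card F" using fin assms(2,3) by (intro psubset_card_mono) auto
  finally show ?thesis .
qed

lemma measure_split:
  assumes "boxfam F" "k \<in> Basis" "H = upH k c \<or> H = loH k c"
  shows "measure lebesgue (\<Union>(splitfam F H)) = measure lebesgue (\<Union>F \<inter> H)"
proof -
  have fin: "finite F" using boxfamD(1)[OF assms(1)] .
  have S: "\<Union>(splitfam F H) \<in> lmeasurable"
    using boxfam_compact[OF boxfam_split[OF assms]] by (rule lmeasurable_compact)
  have sub: "\<Union>(splitfam F H) \<subseteq> \<Union>F \<inter> H" unfolding splitfam_def by auto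
  have "\<Union>F \<inter> H - \<Union>(splitfam F H) \<subseteq> \<Union>((\<lambda>X. X \<inter> H) ` {X\<in>F. interior (X \<inter> H) = {}})"
    unfolding splitfam_def by auto
  moreover have "negligible (\<Union>((\<lambda>X. X \<inter> H) ` {X\<in>F. interior (X \<inter> H) = {}}))"
  proof (rule negligible_Union)
    show "finite ((\<lambda>X. X \<inter> H) ` {X\<in>F. interior (X \<inter> H) = {}})" using fin by auto
  next
    fix T assume "T \<in> (\<lambda>X. X \<inter> H) ` {X\<in>F. interior (X \<inter> H) = {}}"
    then obtain X where X: "X \<in> F" "interior (X \<inter> H) = {}" "T = X \<inter> H" by blast
    obtain a b where ab: "X = cbox a b" using boxfamD(2)[OF assms(1) X(1)] by blast
    obtain a' b' where "cbox a b \<inter> H = cbox a' b'" using cbox_Int_H[OF assms(2,3)] by blast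
    hence T: "T = cbox a' b'" using ab X(3) by simp
    have "interior (cbox a' b') = {}" using X(2) by (simp only: X(3)[symmetric] T)
    hence "box a' b' = {}" by simp
    thus "negligible T" using T negligible_interval(1)[of a' b'] by simp
  qed
  ultimately have neg: "negligible ((\<Union>F \<inter> H) - \<Union>(splitfam F H))"
    using negligible_subset by blast
  have "\<Union>(splitfam F H) - (\<Union>F \<inter> H) = {}" using sub by blast
  hence "negligible (\<Union>(splitfam F H) - (\<Union>F \<inter> H) \<union> ((\<Union>F \<inter> H) - \<Union>(splitfam F H)))"
    using neg by simp
  from measure_negligible_symdiff[OF S this] show ?thesis by (rule sym)
qed

lemma measure_halves:
  assumes "S \<in> lmeasurable" "k \<in> Basis"
  shows "measure lebesgue S = measure lebesgue (S \<inter> upH k c) + measure lebesgue (S \<inter> loH k c)"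
proof -
  have m1: "S \<inter> upH k c \<in> lmeasurable" and m2: "S \<inter> loH k c \<in> lmeasurable"
    using assms(1) closed_upH closed_loH by (auto intro!: fmeasurable_Int_fmeasurable closed_lebesgue)
  have eq: "S = (S \<inter> upH k c) \<union> (S \<inter> loH k c)" unfolding upH_def loH_def by auto
  have "measure lebesgue S = measure lebesgue ((S \<inter> upH k c) \<union> (S \<inter> loH k c))"
    using eq by (rule arg_cong)
  also have "\<dots> = measure lebesgue (S \<inter> upH k c) + measure lebesgue (S \<inter> loH k c)
          - measure lebesgue ((S \<inter> upH k c) \<inter> (S \<inter> loH k c))"
    by (rule measure_Un3[OF m1 m2])
  finally have "measure lebesgue S = measure lebesgue (S \<inter> upH k c) + measure lebesgue (S \<inter> loH k c)
          - measure lebesgue ((S \<inter> upH k c) \<inter> (S \<inter> loH k c))" .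
  moreover have "negligible ((S \<inter> upH k c) \<inter> (S \<inter> loH k c))"
    by (rule negligible_subset[OF negligible_standard_hyperplane[OF assms(2), of c]]) (auto simp: upH_def loH_def)
  ultimately show ?thesis using negligible_imp_measure0 by simp
qed

lemma reflect_measure: "measure lebesgue (uminus ` S) = measure lebesgue (S::'a::euclidean_space set)"
  using measure_lebesgue_affine[of "-1" 0 S] by simp

lemma mcbox: "measure lebesgue (cbox a (b::'a::euclidean_space)) = (if \<forall>i\<in>Basis. a \<bullet> i \<le> b \<bullet> i then \<Prod>i\<in>Basis. (b - a) \<bullet> i else 0)"
  using measure_lborel_cbox_eq[of a b] by simp

lemma basis_comp: "j \<in> Basis \<Longrightarrow> (\<Sum>i\<in>Basis. f i *\<^sub>R i) \<bullet> j = (f j :: real)"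
  by (simp add: inner_sum_left inner_Basis if_distrib cong: if_cong)

lemma measure_cbox_pos:
  assumes "box a b \<noteq> {}"
  shows "0 < measure lebesgue (cbox a (b::'a::euclidean_space))"
proof -
  have h: "\<forall>i\<in>Basis. a\<bullet>i < b\<bullet>i" using assms by (simp add: box_ne_empty)
  hence "\<forall>i\<in>Basis. a\<bullet>i \<le> b\<bullet>i" by (auto intro: less_imp_le)
  hence "measure lebesgue (cbox a b) = (\<Prod>i\<in>Basis. (b - a) \<bullet> i)" by (simp add: mcbox)
  also have "\<dots> > 0" using h by (intro prod_pos) (auto simp: inner_diff_left)
  finally show ?thesis .
qed

lemma phi_key:
  fixes S :: "'a::euclidean_space set"
  assumes S: "S \<in> lmeasurable" "S \<subseteq> cbox l u" and k: "k \<in> Basis" and lu: "\<forall>i\<in>Basis. l\<bullet>i \<le> u\<bullet>i"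
    and st: "s \<le> t"
  shows "\<bar>measure lebesgue (S \<inter> upH k s) - measure lebesgue (S \<inter> upH k t)\<bar> \<le> (\<Prod>i\<in>Basis-{k}. u\<bullet>i - l\<bullet>i) * (t - s)"
proof -
  have ms: "S \<inter> upH k s \<in> lmeasurable" and mt: "S \<inter> upH k t \<in> lmeasurable"
    using S(1) closed_upH by (auto intro!: fmeasurable_Int_fmeasurable closed_lebesgue)
  have sub: "S \<inter> upH k t \<subseteq> S \<inter> upH k s" using st unfolding upH_def by auto
  have d: "measure lebesgue (S \<inter> upH k s - S \<inter> upH k t) = measure lebesgue (S \<inter> upH k s) - measure lebesgue (S \<inter> upH k t)"
    by (rule measure_Diff[OF _ fmeasurableD[OF ms] fmeasurableD[OF mt] sub]) (use fmeasurableD2[OF ms] in simp)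
  define l' where "l' = (\<Sum>i\<in>Basis. (if i = k then s else l\<bullet>i) *\<^sub>R i)"
  define u' where "u' = (\<Sum>i\<in>Basis. (if i = k then t else u\<bullet>i) *\<^sub>R i)"
  have l'i: "l'\<bullet>i = (if i = k then s else l\<bullet>i)" if "i \<in> Basis" for i unfolding l'_def using that by (rule basis_comp)
  have u'i: "u'\<bullet>i = (if i = k then t else u\<bullet>i)" if "i \<in> Basis" for i unfolding u'_def using that by (rule basis_comp)
  have sub2: "S \<inter> upH k s - S \<inter> upH k t \<subseteq> cbox l' u'"
  proof
    fix x assume x: "x \<in> S \<inter> upH k s - S \<inter> upH k t"
    hence xS: "x \<in> cbox l u" using S(2) by auto
    have "s \<le> x\<bullet>k" "x\<bullet>k \<le> t" using x unfolding upH_def by auto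
    thus "x \<in> cbox l' u'" using xS l'i u'i unfolding mem_box by auto
  qed
  have le'i: "\<forall>i\<in>Basis. l'\<bullet>i \<le> u'\<bullet>i" using lu st l'i u'i by auto
  have "measure lebesgue (cbox l' u') = (\<Prod>i\<in>Basis. u'\<bullet>i - l'\<bullet>i)"
    using le'i by (simp add: mcbox inner_diff_left)
  also have "\<dots> = (u'\<bullet>k - l'\<bullet>k) * (\<Prod>i\<in>Basis-{k}. u'\<bullet>i - l'\<bullet>i)"
    using k by (simp add: prod.remove)
  also have "\<dots> = (t - s) * (\<Prod>i\<in>Basis-{k}. u\<bullet>i - l\<bullet>i)"
    using k l'i u'i by (auto intro!: prod.cong)
  finally have mc: "measure lebesgue (cbox l' u') = (t - s) * (\<Prod>i\<in>Basis-{k}. u\<bullet>i - l\<bullet>i)" .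
  have "measure lebesgue (S \<inter> upH k s - S \<inter> upH k t) \<le> measure lebesgue (cbox l' u')"
    using sub2 ms mt by (intro measure_mono_fmeasurable) auto
  moreover have "measure lebesgue (S \<inter> upH k t) \<le> measure lebesgue (S \<inter> upH k s)"
    using sub ms fmeasurableD[OF mt] by (intro measure_mono_fmeasurable) auto
  ultimately show ?thesis using d mc by (simp add: mult.commute)
qed

lemma phi_lipschitz:
  fixes S :: "'a::euclidean_space set"
  assumes S: "S \<in> lmeasurable" "S \<subseteq> cbox l u" and k: "k \<in> Basis" and lu: "\<forall>i\<in>Basis. l\<bullet>i \<le> u\<bullet>i"
  shows "(\<Prod>i\<in>Basis-{k}. u\<bullet>i - l\<bullet>i)-lipschitz_on UNIV (\<lambda>t. measure lebesgue (S \<inter> upH k t))"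
proof (rule lipschitz_onI)
  show L0: "0 \<le> (\<Prod>i\<in>Basis-{k}. u\<bullet>i - l\<bullet>i)" using lu by (intro prod_nonneg) auto
  fix x y :: real
  show "dist (measure lebesgue (S \<inter> upH k x)) (measure lebesgue (S \<inter> upH k y)) \<le> (\<Prod>i\<in>Basis-{k}. u\<bullet>i - l\<bullet>i) * dist x y"
  proof (cases "x \<le> y")
    case True
    have "(\<Prod>i\<in>Basis-{k}. u\<bullet>i - l\<bullet>i) * (y - x) \<le> (\<Prod>i\<in>Basis-{k}. u\<bullet>i - l\<bullet>i) * dist x y"
      using L0 by (intro mult_left_mono) (auto simp: dist_real_def)
    thus ?thesis using phi_key[OF S k lu True] by (simp add: dist_real_def)
  next
    case False
    hence yx: "y \<le> x" by simp
    have "(\<Prod>i\<in>Basis-{k}. u\<bullet>i - l\<bullet>i) * (x - y) \<le> (\<Prod>i\<in>Basis-{k}. u\<bullet>i - l\<bullet>i) * dist x y"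
      using L0 by (intro mult_left_mono) (auto simp: dist_real_def)
    thus ?thesis using phi_key[OF S k lu yx] by (simp add: dist_real_def abs_minus_commute)
  qed
qed

lemma exists_cut:
  fixes S :: "'a::euclidean_space set"
  assumes S: "compact S" and k: "k \<in> Basis" and th: "0 \<le> \<theta>" "\<theta> \<le> 1"
  shows "\<exists>c'. measure lebesgue (S \<inter> upH k c') = \<theta> * measure lebesgue S"
proof (cases "S = {}")
  case True thus ?thesis by simp
next
  case False
  then obtain x0 where x0: "x0 \<in> S" by blast
  have Sm: "S \<in> lmeasurable" using S by (rule lmeasurable_compact)
  obtain a where a: "S \<subseteq> cbox (-a) a" using bounded_subset_cbox_symmetric compact_imp_bounded[OF S] by metis
  have lu: "\<forall>i\<in>Basis. (-a)\<bullet>i \<le> a\<bullet>i" using a x0 unfolding mem_box subset_iff by (meson order_trans)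
  let ?f = "\<lambda>t. measure lebesgue (S \<inter> upH k t)"
  have cont: "continuous_on {(-a)\<bullet>k .. a\<bullet>k + 1} ?f"
    using lipschitz_on_continuous_on[OF phi_lipschitz[OF Sm a k lu]] continuous_on_subset by blast
  have f1: "?f ((-a)\<bullet>k) = measure lebesgue S"
  proof -
    have "(-a)\<bullet>k \<le> x\<bullet>k" if "x \<in> S" for x
    proof -
      have "x \<in> cbox (-a) a" using a that by blast
      thus ?thesis using k unfolding mem_box by blast
    qed
    hence "S \<inter> upH k ((-a)\<bullet>k) = S" unfolding upH_def by auto
    thus ?thesis by simp
  qed
  have f2: "?f (a\<bullet>k + 1) = 0"
  proof -
    have "x\<bullet>k \<le> a\<bullet>k" if "x \<in> S" for x
    proof -
      have "x \<in> cbox (-a) a" using a that by blast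
      thus ?thesis using k unfolding mem_box by blast
    qed
    hence "S \<inter> upH k (a\<bullet>k + 1) = {}" unfolding upH_def by force
    thus ?thesis by simp
  qed
  have "0 \<le> measure lebesgue S" by simp
  hence y: "?f (a\<bullet>k + 1) \<le> \<theta> * measure lebesgue S" "\<theta> * measure lebesgue S \<le> ?f ((-a)\<bullet>k)"
    using th f1 f2 by (auto intro: mult_left_le_one_le)
  have "(-a)\<bullet>k \<le> a\<bullet>k + 1" using lu k by force
  from IVT2'[OF y this cont] show ?thesis by blast
qed

lemma base_sub:
  fixes a b a' b' :: "'a::euclidean_space"
  assumes "box a b \<noteq> {}" "box a' b' \<noteq> {}"
  shows "cbox ((1/2) *\<^sub>R (a + a')) ((1/2) *\<^sub>R (b + b')) \<subseteq> mids (cbox a b) (cbox a' b')"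
proof
  fix z assume z: "z \<in> cbox ((1/2) *\<^sub>R (a + a')) ((1/2) *\<^sub>R (b + b'))"
  have h: "\<forall>i\<in>Basis. a\<bullet>i < b\<bullet>i" "\<forall>i\<in>Basis. a'\<bullet>i < b'\<bullet>i" using assms by (simp_all add: box_ne_empty)
  define D where "D i = (b\<bullet>i - a\<bullet>i) + (b'\<bullet>i - a'\<bullet>i)" for i
  define t where "t i = (2 * (z\<bullet>i) - a\<bullet>i - a'\<bullet>i) / D i" for i
  have zi: "a\<bullet>i + a'\<bullet>i \<le> 2 * (z\<bullet>i) \<and> 2 * (z\<bullet>i) \<le> b\<bullet>i + b'\<bullet>i" if "i \<in> Basis" for i
    using z that unfolding mem_box by (auto simp: inner_add_left)
  have Dp: "D i > 0" if "i \<in> Basis" for i using h that unfolding D_def by (auto simp: add_pos_pos)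
  have t0: "0 \<le> t i" and t1: "t i \<le> 1" and tD: "t i * D i = 2 * (z\<bullet>i) - a\<bullet>i - a'\<bullet>i" if "i \<in> Basis" for i
  proof -
    show "0 \<le> t i" unfolding t_def using zi[OF that] Dp[OF that] by simp
    show "t i \<le> 1" unfolding t_def using zi[OF that] Dp[OF that] by (simp add: D_def divide_le_eq_1)
    show "t i * D i = 2 * (z\<bullet>i) - a\<bullet>i - a'\<bullet>i" unfolding t_def using Dp[OF that] by simp
  qed
  define x where "x = (\<Sum>i\<in>Basis. (a\<bullet>i + t i * (b\<bullet>i - a\<bullet>i)) *\<^sub>R i)"
  define y where "y = (\<Sum>i\<in>Basis. (a'\<bullet>i + t i * (b'\<bullet>i - a'\<bullet>i)) *\<^sub>R i)"
  have xi: "x\<bullet>i = a\<bullet>i + t i * (b\<bullet>i - a\<bullet>i)" if "i \<in> Basis" for i unfolding x_def using that by (rule basis_comp)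
  have yi: "y\<bullet>i = a'\<bullet>i + t i * (b'\<bullet>i - a'\<bullet>i)" if "i \<in> Basis" for i unfolding y_def using that by (rule basis_comp)
  have "x \<in> cbox a b"
    unfolding mem_box
  proof
    fix i :: 'a assume i: "i \<in> Basis"
    have "0 \<le> t i * (b\<bullet>i - a\<bullet>i)" using t0[OF i] h i by (intro mult_nonneg_nonneg) (auto simp: less_imp_le)
    moreover have "t i * (b\<bullet>i - a\<bullet>i) \<le> b\<bullet>i - a\<bullet>i" using t1[OF i] h i by (intro mult_left_le_one_le) (auto intro: t0 less_imp_le)
    ultimately show "a\<bullet>i \<le> x\<bullet>i \<and> x\<bullet>i \<le> b\<bullet>i" using xi[OF i] by simp
  qed
  moreover have "y \<in> cbox a' b'"
    unfolding mem_box
  proof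
    fix i :: 'a assume i: "i \<in> Basis"
    have "0 \<le> t i * (b'\<bullet>i - a'\<bullet>i)" using t0[OF i] h i by (intro mult_nonneg_nonneg) (auto simp: less_imp_le)
    moreover have "t i * (b'\<bullet>i - a'\<bullet>i) \<le> b'\<bullet>i - a'\<bullet>i" using t1[OF i] h i by (intro mult_left_le_one_le) (auto intro: t0 less_imp_le)
    ultimately show "a'\<bullet>i \<le> y\<bullet>i \<and> y\<bullet>i \<le> b'\<bullet>i" using yi[OF i] by simp
  qed
  moreover have "z = (1/2) *\<^sub>R (x + y)"
  proof (rule euclidean_eqI)
    fix i :: 'a assume i: "i \<in> Basis"
    have "((1/2) *\<^sub>R (x + y))\<bullet>i = (x\<bullet>i + y\<bullet>i) / 2" by (simp add: inner_add_left)
    also have "\<dots> = (a\<bullet>i + a'\<bullet>i + t i * D i) / 2" by (simp add: xi[OF i] yi[OF i] D_def algebra_simps)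
    also have "\<dots> = z\<bullet>i" using tD[OF i] by simp
    finally show "z\<bullet>i = ((1/2) *\<^sub>R (x + y))\<bullet>i" by simp
  qed
  ultimately show "z \<in> mids (cbox a b) (cbox a' b')" unfolding mids_iff by blast
qed

lemma sqrt_prod: "sqrt (prod f A) = (\<Prod>i\<in>A. sqrt (f i))"
  by (induct A rule: infinite_finite_induct) (auto simp: real_sqrt_mult)

lemma min_le_sqrt: "0 \<le> X \<Longrightarrow> 0 \<le> Y \<Longrightarrow> min X Y \<le> sqrt (X * Y)"
proof -
  assume X: "0 \<le> X" and Y: "0 \<le> Y"
  show ?thesis
  proof (cases "X \<le> Y")
    case True
    hence "sqrt (X * X) \<le> sqrt (X * Y)" using X by (intro real_sqrt_le_mono mult_left_mono) auto
    thus ?thesis using True X by simp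
  next
    case False
    hence "sqrt (Y * Y) \<le> sqrt (X * Y)" using Y by (intro real_sqrt_le_mono mult_right_mono) auto
    thus ?thesis using False Y by simp
  qed
qed

lemma base_case:
  fixes a b a' b' :: "'a::euclidean_space"
  assumes "box a b \<noteq> {}" "box a' b' \<noteq> {}"
  shows "min (measure lebesgue (cbox a b)) (measure lebesgue (cbox a' b')) \<le> measure lebesgue (mids (cbox a b) (cbox a' b'))"
proof -
  have h: "\<forall>i\<in>Basis. a\<bullet>i < b\<bullet>i" "\<forall>i\<in>Basis. a'\<bullet>i < b'\<bullet>i" using assms by (simp_all add: box_ne_empty)
  let ?m = "(1/2) *\<^sub>R (a + a')" and ?M = "(1/2) *\<^sub>R (b + b')"
  have X: "measure lebesgue (cbox a b) = (\<Prod>i\<in>Basis. b\<bullet>i - a\<bullet>i)"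
    using h by (simp add: mcbox inner_diff_left less_imp_le)
  have Y: "measure lebesgue (cbox a' b') = (\<Prod>i\<in>Basis. b'\<bullet>i - a'\<bullet>i)"
    using h by (simp add: mcbox inner_diff_left less_imp_le)
  have "\<forall>i\<in>Basis. ?m\<bullet>i \<le> ?M\<bullet>i"
  proof
    fix i :: 'a assume i: "i \<in> Basis"
    have "a\<bullet>i < b\<bullet>i" "a'\<bullet>i < b'\<bullet>i" using h i by auto
    thus "?m\<bullet>i \<le> ?M\<bullet>i" by (simp add: inner_add_left)
  qed
  hence Z: "measure lebesgue (cbox ?m ?M) = (\<Prod>i\<in>Basis. ((b\<bullet>i - a\<bullet>i) + (b'\<bullet>i - a'\<bullet>i)) / 2)"
    by (simp add: mcbox inner_diff_left inner_add_left diff_divide_distrib add_divide_distrib) (auto intro!: prod.cong simp: algebra_simps)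
  have "min (measure lebesgue (cbox a b)) (measure lebesgue (cbox a' b'))
      \<le> sqrt ((\<Prod>i\<in>Basis. b\<bullet>i - a\<bullet>i) * (\<Prod>i\<in>Basis. b'\<bullet>i - a'\<bullet>i))"
    unfolding X Y using h by (intro min_le_sqrt prod_nonneg) (auto intro: less_imp_le)
  also have "\<dots> = (\<Prod>i\<in>Basis. sqrt ((b\<bullet>i - a\<bullet>i) * (b'\<bullet>i - a'\<bullet>i)))"
    by (simp add: prod.distrib[symmetric] sqrt_prod)
  also have "\<dots> \<le> (\<Prod>i\<in>Basis. ((b\<bullet>i - a\<bullet>i) + (b'\<bullet>i - a'\<bullet>i)) / 2)"
    using h by (intro prod_mono conjI arith_geo_mean_sqrt) (auto intro: less_imp_le)
  also have "\<dots> = measure lebesgue (cbox ?m ?M)" using Z by simp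
  also have "\<dots> \<le> measure lebesgue (mids (cbox a b) (cbox a' b'))"
    using base_sub[OF assms] lmeasurable_compact[OF compact_mids[OF compact_cbox compact_cbox]]
    by (intro measure_mono_fmeasurable) auto
  finally show ?thesis .
qed

lemma int_empty_up:
  assumes k: "k \<in> Basis" and "b\<bullet>k \<le> c"
  shows "interior (cbox a b \<inter> upH k c) = {}"
proof -
  let ?a = "\<Sum>i\<in>Basis. (if i = k then max (a\<bullet>k) c else a\<bullet>i) *\<^sub>R i"
  have "cbox a b \<inter> upH k c = cbox ?a b" unfolding upH_def using interval_split(2)[OF k] by blast
  moreover have "box ?a b = {}"
    unfolding box_eq_empty using k assms(2) basis_comp[OF k, of "\<lambda>i. if i = k then max (a\<bullet>k) c else a\<bullet>i"] by force
  ultimately show ?thesis by simp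
qed

lemma int_empty_lo:
  assumes k: "k \<in> Basis" and "c \<le> a\<bullet>k"
  shows "interior (cbox a b \<inter> loH k c) = {}"
proof -
  let ?b = "\<Sum>i\<in>Basis. (if i = k then min (b\<bullet>k) c else b\<bullet>i) *\<^sub>R i"
  have "cbox a b \<inter> loH k c = cbox a ?b" unfolding loH_def using interval_split(1)[OF k] by blast
  moreover have "box a ?b = {}"
    unfolding box_eq_empty using k assms(2) basis_comp[OF k, of "\<lambda>i. if i = k then min (b\<bullet>k) c else b\<bullet>i"] by force
  ultimately show ?thesis by simp
qed

lemma sep_pair:
  assumes F: "boxfam F" and XY: "X \<in> F" "Y \<in> F" "X \<noteq> Y"
  shows "\<exists>a b a' b' k. cbox a b \<in> F \<and> cbox a' b' \<in> F \<and> box a b \<noteq> {} \<and> box a' b' \<noteq> {} \<and> k \<in> Basis \<and> b\<bullet>k \<le> a'\<bullet>k"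
proof -
  obtain a b where X: "X = cbox a b" "box a b \<noteq> {}" using boxfamD(2)[OF F XY(1)] by blast
  obtain a' b' where Y: "Y = cbox a' b'" "box a' b' \<noteq> {}" using boxfamD(2)[OF F XY(2)] by blast
  have "interior X \<inter> interior Y = {}" using boxfamD(3)[OF F XY] .
  hence "box a b \<inter> box a' b' = {}" using X Y by simp
  then obtain k where k: "k \<in> Basis" "b\<bullet>k \<le> a'\<bullet>k \<or> b'\<bullet>k \<le> a\<bullet>k" using box_sep X(2) Y(2) by blast
  thus ?thesis using X Y XY by blast
qed

lemma min_split: "0 \<le> (\<theta>::real) \<Longrightarrow> \<theta> \<le> 1 \<Longrightarrow> min (\<theta>*a) (\<theta>*b) + min (a - \<theta>*a) (b - \<theta>*b) = min a b"
proof -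
  assume t: "0 \<le> \<theta>" "\<theta> \<le> 1"
  show ?thesis
  proof (cases "a \<le> b")
    case True
    have "\<theta>*a \<le> \<theta>*b" using True t by (intro mult_left_mono) auto
    moreover have "(1-\<theta>)*a \<le> (1-\<theta>)*b" using True t by (intro mult_left_mono) auto
    ultimately show ?thesis using True by (simp add: algebra_simps min_def)
  next
    case False
    have "\<theta>*b \<le> \<theta>*a" using False t by (intro mult_left_mono) auto
    moreover have "(1-\<theta>)*b \<le> (1-\<theta>)*a" using False t by (intro mult_left_mono) auto
    ultimately show ?thesis using False by (simp add: algebra_simps min_def)
  qed
qed

lemma splitfam_sub: "\<Union>(splitfam F H) \<subseteq> \<Union>F \<inter> H"
  unfolding splitfam_def by auto

lemma BM_step:
  fixes F G :: "'a::euclidean_space set set"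
  assumes IH: "\<And>F' G' :: 'a set set. boxfam F' \<Longrightarrow> boxfam G' \<Longrightarrow> card F' + card G' < card F + card G \<Longrightarrow>
      min (measure lebesgue (\<Union>F')) (measure lebesgue (\<Union>G')) \<le> measure lebesgue (mids (\<Union>F') (\<Union>G'))"
    and F: "boxfam F" and G: "boxfam G" and XY: "X \<in> F" "Y \<in> F" "X \<noteq> Y"
  shows "min (measure lebesgue (\<Union>F)) (measure lebesgue (\<Union>G)) \<le> measure lebesgue (mids (\<Union>F) (\<Union>G))"
proof -
  obtain a b a' b' k where X0: "cbox a b \<in> F" and Y0: "cbox a' b' \<in> F" and bx: "box a b \<noteq> {}" "box a' b' \<noteq> {}"
    and k: "k \<in> Basis" and ba: "b\<bullet>k \<le> a'\<bullet>k"
    using sep_pair[OF F XY] by blast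
  define c where "c = b\<bullet>k"
  let ?A = "\<Union>F" and ?B = "\<Union>G"
  have Am: "?A \<in> lmeasurable" using boxfam_compact[OF F] by (rule lmeasurable_compact)
  have Bc: "compact ?B" using boxfam_compact[OF G] .
  have Bm: "?B \<in> lmeasurable" using Bc by (rule lmeasurable_compact)
  define Fp where "Fp = splitfam F (upH k c)"
  define Fm where "Fm = splitfam F (loH k c)"
  have bFp: "boxfam Fp" unfolding Fp_def using boxfam_split[OF F k] by blast
  have bFm: "boxfam Fm" unfolding Fm_def using boxfam_split[OF F k] by blast
  have cFp: "card Fp < card F" unfolding Fp_def
    by (rule card_split_less[OF F X0 int_empty_up[OF k]]) (simp add: c_def)
  have cFm: "card Fm < card F" unfolding Fm_def
    by (rule card_split_less[OF F Y0 int_empty_lo[OF k]]) (use ba in \<open>simp add: c_def\<close>)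
  have mFp: "measure lebesgue (\<Union>Fp) = measure lebesgue (?A \<inter> upH k c)"
    unfolding Fp_def using measure_split[OF F k] by blast
  have mFm: "measure lebesgue (\<Union>Fm) = measure lebesgue (?A \<inter> loH k c)"
    unfolding Fm_def using measure_split[OF F k] by blast
  have hA: "measure lebesgue ?A = measure lebesgue (?A \<inter> upH k c) + measure lebesgue (?A \<inter> loH k c)"
    using measure_halves[OF Am k] .
  have mAu: "?A \<inter> upH k c \<in> lmeasurable" and mAl: "?A \<inter> loH k c \<in> lmeasurable"
    using Am closed_upH closed_loH by (auto intro!: fmeasurable_Int_fmeasurable closed_lebesgue)
  have "cbox a' b' \<subseteq> ?A \<inter> upH k c"
  proof
    fix x assume x: "x \<in> cbox a' b'"
    hence "a'\<bullet>k \<le> x\<bullet>k" using k unfolding mem_box by blast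
    thus "x \<in> ?A \<inter> upH k c" using x Y0 ba unfolding upH_def c_def by auto
  qed
  hence posU: "0 < measure lebesgue (?A \<inter> upH k c)"
    using measure_cbox_pos[OF bx(2)] measure_mono_fmeasurable[OF _ _ mAu, of "cbox a' b'"] by force
  have "cbox a b \<subseteq> ?A \<inter> loH k c"
  proof
    fix x assume x: "x \<in> cbox a b"
    hence "x\<bullet>k \<le> b\<bullet>k" using k unfolding mem_box by blast
    thus "x \<in> ?A \<inter> loH k c" using x X0 unfolding loH_def c_def by auto
  qed
  hence posL: "0 < measure lebesgue (?A \<inter> loH k c)"
    using measure_cbox_pos[OF bx(1)] measure_mono_fmeasurable[OF _ _ mAl, of "cbox a b"] by force
  have mApos: "0 < measure lebesgue ?A" using hA posU posL by simp
  define \<theta> where "\<theta> = measure lebesgue (?A \<inter> upH k c) / measure lebesgue ?A"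
  have th0: "0 \<le> \<theta>" unfolding \<theta>_def by simp
  have th1: "\<theta> \<le> 1" unfolding \<theta>_def using hA mApos posL by (simp add: divide_le_eq_1)
  have Au: "measure lebesgue (?A \<inter> upH k c) = \<theta> * measure lebesgue ?A" unfolding \<theta>_def using mApos by simp
  have Al: "measure lebesgue (?A \<inter> loH k c) = measure lebesgue ?A - \<theta> * measure lebesgue ?A" using hA Au by simp
  obtain c' where c': "measure lebesgue (?B \<inter> upH k c') = \<theta> * measure lebesgue ?B"
    using exists_cut[OF Bc k th0 th1] by blast
  have hB: "measure lebesgue ?B = measure lebesgue (?B \<inter> upH k c') + measure lebesgue (?B \<inter> loH k c')"
    using measure_halves[OF Bm k] .
  define Gp where "Gp = splitfam G (upH k c')"
  define Gm where "Gm = splitfam G (loH k c')"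
  have bGp: "boxfam Gp" unfolding Gp_def using boxfam_split[OF G k] by blast
  have bGm: "boxfam Gm" unfolding Gm_def using boxfam_split[OF G k] by blast
  have cGp: "card Gp \<le> card G" unfolding Gp_def by (rule card_split_le[OF G])
  have cGm: "card Gm \<le> card G" unfolding Gm_def by (rule card_split_le[OF G])
  have mGp: "measure lebesgue (\<Union>Gp) = \<theta> * measure lebesgue ?B"
    unfolding Gp_def using measure_split[OF G k] c' by metis
  have mGm: "measure lebesgue (\<Union>Gm) = measure lebesgue ?B - \<theta> * measure lebesgue ?B"
    unfolding Gm_def using measure_split[OF G k, of "loH k c'" c'] c' hB by simp
  have IH1: "min (\<theta> * measure lebesgue ?A) (\<theta> * measure lebesgue ?B) \<le> measure lebesgue (mids (\<Union>Fp) (\<Union>Gp))"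
    using IH[OF bFp bGp] cFp cGp mFp mGp Au by simp
  have IH2: "min (measure lebesgue ?A - \<theta> * measure lebesgue ?A) (measure lebesgue ?B - \<theta> * measure lebesgue ?B)
      \<le> measure lebesgue (mids (\<Union>Fm) (\<Union>Gm))"
    using IH[OF bFm bGm] cFm cGm mFm mGm Al by simp
  define h where "h = (c + c') / 2"
  let ?M = "mids ?A ?B"
  have Mm: "?M \<in> lmeasurable" using compact_mids[OF boxfam_compact[OF F] Bc] by (rule lmeasurable_compact)
  have sub1: "mids (\<Union>Fp) (\<Union>Gp) \<subseteq> ?M \<inter> upH k h"
  proof
    fix z assume "z \<in> mids (\<Union>Fp) (\<Union>Gp)"
    then obtain x y where xy: "x \<in> \<Union>Fp" "y \<in> \<Union>Gp" "z = (1/2) *\<^sub>R (x + y)" unfolding mids_iff by blast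
    have x: "x \<in> ?A" "c \<le> x\<bullet>k" using xy(1) splitfam_sub[of F "upH k c"] unfolding Fp_def upH_def by auto
    have y: "y \<in> ?B" "c' \<le> y\<bullet>k" using xy(2) splitfam_sub[of G "upH k c'"] unfolding Gp_def upH_def by auto
    have "z \<in> ?M" using x y xy(3) unfolding mids_iff by blast
    moreover have "h \<le> z\<bullet>k" using x y xy(3) unfolding h_def by (simp add: inner_add_left)
    ultimately show "z \<in> ?M \<inter> upH k h" unfolding upH_def by simp
  qed
  have sub2: "mids (\<Union>Fm) (\<Union>Gm) \<subseteq> ?M \<inter> loH k h"
  proof
    fix z assume "z \<in> mids (\<Union>Fm) (\<Union>Gm)"
    then obtain x y where xy: "x \<in> \<Union>Fm" "y \<in> \<Union>Gm" "z = (1/2) *\<^sub>R (x + y)" unfolding mids_iff by blast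
    have x: "x \<in> ?A" "x\<bullet>k \<le> c" using xy(1) splitfam_sub[of F "loH k c"] unfolding Fm_def loH_def by auto
    have y: "y \<in> ?B" "y\<bullet>k \<le> c'" using xy(2) splitfam_sub[of G "loH k c'"] unfolding Gm_def loH_def by auto
    have "z \<in> ?M" using x y xy(3) unfolding mids_iff by blast
    moreover have "z\<bullet>k \<le> h" using x y xy(3) unfolding h_def by (simp add: inner_add_left)
    ultimately show "z \<in> ?M \<inter> loH k h" unfolding loH_def by simp
  qed
  have Mu: "?M \<inter> upH k h \<in> lmeasurable" and Ml: "?M \<inter> loH k h \<in> lmeasurable"
    using Mm closed_upH closed_loH by (auto intro!: fmeasurable_Int_fmeasurable closed_lebesgue)
  have c1: "compact (mids (\<Union>Fp) (\<Union>Gp))" by (intro compact_mids boxfam_compact bFp bGp)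
  have c2: "compact (mids (\<Union>Fm) (\<Union>Gm))" by (intro compact_mids boxfam_compact bFm bGm)
  have le1: "measure lebesgue (mids (\<Union>Fp) (\<Union>Gp)) \<le> measure lebesgue (?M \<inter> upH k h)"
    using sub1 lmeasurable_compact[OF c1] Mu by (intro measure_mono_fmeasurable) auto
  have le2: "measure lebesgue (mids (\<Union>Fm) (\<Union>Gm)) \<le> measure lebesgue (?M \<inter> loH k h)"
    using sub2 lmeasurable_compact[OF c2] Ml by (intro measure_mono_fmeasurable) auto
  have hM: "measure lebesgue ?M = measure lebesgue (?M \<inter> upH k h) + measure lebesgue (?M \<inter> loH k h)"
    using measure_halves[OF Mm k] .
  have "min (measure lebesgue ?A) (measure lebesgue ?B)
      = min (\<theta> * measure lebesgue ?A) (\<theta> * measure lebesgue ?B)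
        + min (measure lebesgue ?A - \<theta> * measure lebesgue ?A) (measure lebesgue ?B - \<theta> * measure lebesgue ?B)"
    using min_split[OF th0 th1] by simp
  also have "\<dots> \<le> measure lebesgue ?M" using IH1 IH2 le1 le2 hM by linarith
  finally show ?thesis .
qed

lemma BM_boxes:
  fixes F G :: "'a::euclidean_space set set"
  assumes "boxfam F" "boxfam G"
  shows "min (measure lebesgue (\<Union>F)) (measure lebesgue (\<Union>G)) \<le> measure lebesgue (mids (\<Union>F) (\<Union>G))"
  using assms
proof (induction "card F + card G" arbitrary: F G rule: less_induct)
  case less
  have IH: "\<And>F' G' :: 'a set set. boxfam F' \<Longrightarrow> boxfam G' \<Longrightarrow> card F' + card G' < card F + card G \<Longrightarrow>
      min (measure lebesgue (\<Union>F')) (measure lebesgue (\<Union>G')) \<le> measure lebesgue (mids (\<Union>F') (\<Union>G'))"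
    using less.hyps by blast
  show ?case
  proof (cases "\<exists>X\<in>F. \<exists>Y\<in>F. X \<noteq> Y")
    case True
    then obtain X Y where XY: "X \<in> F" "Y \<in> F" "X \<noteq> Y" by blast
    show ?thesis by (rule BM_step[OF IH less.prems XY]) auto
  next
    case nF: False
    show ?thesis
    proof (cases "\<exists>X\<in>G. \<exists>Y\<in>G. X \<noteq> Y")
      case True
      then obtain X Y where XY: "X \<in> G" "Y \<in> G" "X \<noteq> Y" by blast
      have IH': "\<And>F' G' :: 'a set set. boxfam F' \<Longrightarrow> boxfam G' \<Longrightarrow> card F' + card G' < card G + card F \<Longrightarrow>
        min (measure lebesgue (\<Union>F')) (measure lebesgue (\<Union>G')) \<le> measure lebesgue (mids (\<Union>F') (\<Union>G'))"
        using IH by (simp add: add.commute)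
      have "min (measure lebesgue (\<Union>G)) (measure lebesgue (\<Union>F)) \<le> measure lebesgue (mids (\<Union>G) (\<Union>F))"
        by (rule BM_step[OF IH' less.prems(2) less.prems(1) XY])
      thus ?thesis by (simp add: min.commute mids_commute)
    next
      case nG: False
      show ?thesis
      proof (cases "F = {} \<or> G = {}")
        case True
        thus ?thesis by auto
      next
        case False
        then obtain X Y where X: "X \<in> F" and Y: "Y \<in> G" by blast
        have FX: "F = {X}" using nF X by blast
        have GY: "G = {Y}" using nG Y by blast
        obtain a b where ab: "X = cbox a b" "box a b \<noteq> {}" using boxfamD(2)[OF less.prems(1) X] by blast
        obtain a' b' where ab': "Y = cbox a' b'" "box a' b' \<noteq> {}" using boxfamD(2)[OF less.prems(2) Y] by blast
        show ?thesis unfolding FX GY using base_case[OF ab(2) ab'(2)] ab(1) ab'(1) by simp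
      qed
    qed
  qed
qed

lemma measure_cball_eq:
  assumes "0 \<le> r"
  shows "measure lebesgue (cball (c::'a::euclidean_space) r) = unit_ball_vol (DIM('a)) * r ^ DIM('a)"
proof -
  have "emeasure lborel (cball c r) = ennreal (unit_ball_vol (DIM('a)) * r ^ DIM('a))"
    using emeasure_cball[OF assms] .
  moreover have "0 \<le> unit_ball_vol (DIM('a)) * r ^ DIM('a)" using assms by simp
  ultimately have "measure lborel (cball c r) = unit_ball_vol (DIM('a)) * r ^ DIM('a)"
    unfolding measure_def by simp
  thus ?thesis by simp
qed

lemma iso_eps:
  fixes S :: "'a::euclidean_space set"
  assumes S: "open S" "bounded S" and e: "e > 0"
  shows "measure lebesgue S - e \<le> unit_ball_vol DIM('a) * (diameter S / 2) ^ DIM('a)"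
proof -
  have Sm: "S \<in> lmeasurable" using lmeasurable_open[OF S(2) S(1)] .
  obtain \<D> where D: "countable \<D>" "\<D> \<subseteq> Pow S" "\<And>X. X \<in> \<D> \<Longrightarrow> \<exists>a b. X = cbox a b" "\<Union>\<D> = S"
    using open_countable_Union_open_cbox[OF S(1)] by metis
  have Dm: "\<And>d. d \<in> \<D> \<Longrightarrow> d \<in> lmeasurable" using D(3) by blast
  have Db: "measure lebesgue (\<Union>D') \<le> measure lebesgue S" if "D' \<subseteq> \<D>" "finite D'" for D'
  proof -
    have "\<Union>D' \<subseteq> S" using that D(2) by blast
    moreover have "\<Union>D' \<in> sets lebesgue" using that Dm by (intro sets.finite_Union) (auto dest: fmeasurableD)
    ultimately show ?thesis using Sm by (intro measure_mono_fmeasurable) auto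
  qed
  obtain D' where D': "D' \<subseteq> \<D>" "finite D'" "measure lebesgue (\<Union>\<D>) - e < measure lebesgue (\<Union>D')"
    using measure_countable_Union_approachable[OF D(1) e Dm Db] by blast
  obtain p where p: "p division_of (\<Union>D')"
    using elementary_unions_intervals[OF D'(2)] D'(1) D(3) by blast
  define F where "F = {K\<in>p. interior K \<noteq> {}}"
  have pfin: "finite p" using p by blast
  have bF: "boxfam F"
  proof (rule boxfamI)
    show "finite F" unfolding F_def using pfin by simp
  next
    fix X assume X: "X \<in> F"
    then obtain a b where "X = cbox a b" using p unfolding F_def by blast
    thus "\<exists>a b. X = cbox a b \<and> box a b \<noteq> {}" using X unfolding F_def by auto
  next
    fix X Y assume "X \<in> F" "Y \<in> F" "X \<noteq> Y"
    thus "interior X \<inter> interior Y = {}" using division_ofD(5)[OF p] unfolding F_def by blast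
  qed
  have Fsub: "\<Union>F \<subseteq> S" using division_ofD(6)[OF p] D'(1) D(2) unfolding F_def by blast
  have Fm: "\<Union>F \<in> lmeasurable" using boxfam_compact[OF bF] by (rule lmeasurable_compact)
  have negrest: "negligible (\<Union>{K\<in>p. interior K = {}})"
  proof (rule negligible_Union)
    show "finite {K\<in>p. interior K = {}}" using pfin by simp
  next
    fix K assume K: "K \<in> {K\<in>p. interior K = {}}"
    then obtain a b where ab: "K = cbox a b" using p by blast
    hence "box a b = {}" using K by simp
    thus "negligible K" using ab negligible_interval(1)[of a b] by simp
  qed
  have eqU: "\<Union>D' = \<Union>F \<union> \<Union>{K\<in>p. interior K = {}}" using division_ofD(6)[OF p] unfolding F_def by blast
  have "measure lebesgue (\<Union>D') = measure lebesgue (\<Union>F)"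
  proof (rule measure_negligible_symdiff[OF Fm])
    show "negligible (\<Union>F - \<Union>D' \<union> (\<Union>D' - \<Union>F))"
      by (rule negligible_subset[OF negrest]) (use eqU in blast)
  qed
  hence mF: "measure lebesgue S - e < measure lebesgue (\<Union>F)" using D'(3) D(4) by simp
  define G where "G = (\<lambda>X. uminus ` X) ` F"
  have bG: "boxfam G"
  proof (rule boxfamI)
    show "finite G" unfolding G_def using boxfamD(1)[OF bF] by simp
  next
    fix Y assume "Y \<in> G"
    then obtain X where X: "X \<in> F" "Y = uminus ` X" unfolding G_def by blast
    obtain a b where ab: "X = cbox a b" "box a b \<noteq> {}" using boxfamD(2)[OF bF X(1)] by blast
    have "Y = cbox (-b) (-a)" using X(2) ab(1) by simp
    moreover have "box (-b) (-a) \<noteq> {}" using ab(2) unfolding box_ne_empty by (auto simp: inner_minus_left)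
    ultimately show "\<exists>a b. Y = cbox a b \<and> box a b \<noteq> {}" by blast
  next
    fix Y Z assume YZ: "Y \<in> G" "Z \<in> G" "Y \<noteq> Z"
    then obtain X X' where X: "X \<in> F" "Y = uminus ` X" and X': "X' \<in> F" "Z = uminus ` X'" unfolding G_def by blast
    have "X \<noteq> X'" using X X' YZ(3) by blast
    hence "interior X \<inter> interior X' = {}" using boxfamD(3)[OF bF X(1) X'(1)] by blast
    thus "interior Y \<inter> interior Z = {}" unfolding X(2) X'(2) interior_negations by auto
  qed
  have UG: "\<Union>G = uminus ` \<Union>F" unfolding G_def by blast
  have "measure lebesgue (\<Union>F) = min (measure lebesgue (\<Union>F)) (measure lebesgue (\<Union>G))"
    unfolding UG reflect_measure by simp
  also have "\<dots> \<le> measure lebesgue (mids (\<Union>F) (\<Union>G))" by (rule BM_boxes[OF bF bG])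
  also have "\<dots> \<le> measure lebesgue (cball (0::'a) (diameter S / 2))"
  proof (rule measure_mono_fmeasurable)
    show "mids (\<Union>F) (\<Union>G) \<subseteq> cball 0 (diameter S / 2)"
    proof
      fix z assume "z \<in> mids (\<Union>F) (\<Union>G)"
      then obtain x y where xy: "x \<in> \<Union>F" "y \<in> \<Union>F" "z = (1/2) *\<^sub>R (x + - y)" unfolding mids_iff UG by blast
      have "dist x y \<le> diameter S" using diameter_bounded_bound[OF S(2)] xy Fsub by blast
      moreover have "norm z = dist x y / 2" using xy(3) by (simp add: dist_norm)
      ultimately show "z \<in> cball 0 (diameter S / 2)" by simp
    qed
    show "mids (\<Union>F) (\<Union>G) \<in> sets lebesgue"
      using lmeasurable_compact[OF compact_mids[OF boxfam_compact[OF bF] boxfam_compact[OF bG]]] by (rule fmeasurableD)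
    show "cball 0 (diameter S / 2) \<in> lmeasurable" by simp
  qed
  also have "\<dots> = unit_ball_vol DIM('a) * (diameter S / 2) ^ DIM('a)"
    by (rule measure_cball_eq) (simp add: diameter_ge_0 S(2))
  finally show ?thesis using mF by simp
qed

theorem isodiametric:
  fixes S :: "'a::euclidean_space set"
  assumes S: "open S" "bounded S"
  shows "measure lebesgue S \<le> unit_ball_vol DIM('a) * (diameter S / 2) ^ DIM('a)"
proof (rule field_le_epsilon)
  fix e :: real assume "0 < e"
  from iso_eps[OF S this] show "measure lebesgue S \<le> unit_ball_vol DIM('a) * (diameter S / 2) ^ DIM('a) + e"
    by simp
qed

lemma cont_set_integrable:
  fixes f :: "'a::euclidean_space \<Rightarrow> real"
  assumes "compact S" "continuous_on S f"
  shows "set_integrable lebesgue S f"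
proof -
  have "integrable lborel (\<lambda>x. indicator S x *\<^sub>R f x)" by (rule borel_integrable_compact[OF assms])
  thus ?thesis unfolding set_integrable_def using integrable_completion by (metis borel_measurable_integrable sets_lborel)
qed

lemma set_integral_mono_set_nonneg:
  fixes f :: "'a \<Rightarrow> real"
  assumes "set_integrable M B f" "A \<in> sets M" "A \<subseteq> B" "\<And>x. x \<in> B \<Longrightarrow> 0 \<le> f x"
  shows "(LINT x:A|M. f x) \<le> (LINT x:B|M. f x)"
proof -
  have iA: "set_integrable M A f" by (rule set_integrable_subset[OF assms(1-3)])
  show ?thesis
    unfolding set_lebesgue_integral_def
  proof (rule integral_mono)
    show "integrable M (\<lambda>x. indicator A x *\<^sub>R f x)" using iA unfolding set_integrable_def .
    show "integrable M (\<lambda>x. indicator B x *\<^sub>R f x)" using assms(1) unfolding set_integrable_def .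
    fix x show "indicator A x *\<^sub>R f x \<le> indicator B x *\<^sub>R f x"
      using assms(3,4) by (auto simp: indicator_def)
  qed
qed

lemma young_pt:
  fixes p u K :: real
  assumes p: "1 \<le> p" and u: "0 \<le> u" and K: "0 < K"
  shows "u \<le> (1 / (p * K powr (p - 1))) * u powr p + (1 - 1/p) * K"
proof (cases "p = 1 \<or> u = 0")
  case True
  thus ?thesis
  proof
    assume "p = 1" thus ?thesis using u K by simp
  next
    assume "u = 0" thus ?thesis using p K by (simp add: divide_le_eq)
  qed
next
  case False
  hence p1: "1 < p" and u0: "0 < u" using p u by auto
  let ?a = "(u / K) powr p"
  have "?a powr (1/p) * 1 powr (1 - 1/p) \<le> (1/p) * ?a + (1 - 1/p) * 1"
    using p1 u0 K by (intro Youngs_inequality_0) (auto simp: field_simps)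
  moreover have "?a powr (1/p) = u / K" using u0 K p1 by (simp add: powr_powr)
  ultimately have "u / K \<le> (1/p) * ?a + (1 - 1/p)" by simp
  hence "K * (u / K) \<le> K * ((1/p) * ?a + (1 - 1/p))" using K by (intro mult_left_mono) auto
  hence "u \<le> K * (1/p) * ?a + (1 - 1/p) * K" using K by (simp add: algebra_simps)
  moreover have "K * (1/p) * ?a = (1 / (p * K powr (p - 1))) * u powr p"
  proof -
    have "?a = u powr p / K powr p" using u0 K by (simp add: powr_divide)
    moreover have "K powr p = K * K powr (p - 1)" using K by (simp add: powr_diff)
    ultimately show ?thesis using K p1 by (simp add: field_simps)
  qed
  ultimately show ?thesis by simp
qed

lemma L1_Lp:
  fixes w :: "'a::euclidean_space \<Rightarrow> real"
  assumes p: "1 \<le> p" and S: "compact S" and w: "continuous_on S w"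
    and O: "\<Omega> \<in> sets lebesgue" "\<Omega> \<subseteq> S" and D: "D \<in> sets lebesgue" "D \<subseteq> \<Omega>"
    and Dpos: "0 < measure lebesgue D"
  shows "(LINT x:D|lebesgue. \<bar>w x\<bar>) \<le> measure lebesgue D * ((LINT x:\<Omega>|lebesgue. \<bar>w x\<bar> powr p) / measure lebesgue D) powr (1/p)"
proof -
  have c1: "continuous_on S (\<lambda>x. \<bar>w x\<bar>)" using w by (intro continuous_intros)
  have c2: "continuous_on S (\<lambda>x. \<bar>w x\<bar> powr p)"
    using c1 p by (intro continuous_on_powr') (auto intro: continuous_on_const)
  have i1S: "set_integrable lebesgue S (\<lambda>x. \<bar>w x\<bar>)" by (rule cont_set_integrable[OF S c1])
  have i2S: "set_integrable lebesgue S (\<lambda>x. \<bar>w x\<bar> powr p)" by (rule cont_set_integrable[OF S c2])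
  have DS: "D \<subseteq> S" using D O by blast
  have i1D: "set_integrable lebesgue D (\<lambda>x. \<bar>w x\<bar>)" by (rule set_integrable_subset[OF i1S D(1) DS])
  have i2D: "set_integrable lebesgue D (\<lambda>x. \<bar>w x\<bar> powr p)" by (rule set_integrable_subset[OF i2S D(1) DS])
  have i2O: "set_integrable lebesgue \<Omega> (\<lambda>x. \<bar>w x\<bar> powr p)" by (rule set_integrable_subset[OF i2S O])
  have Dfin: "emeasure lebesgue D \<noteq> \<infinity>"
  proof -
    have "D \<in> lmeasurable" using DS lmeasurable_compact[OF S] D(1) by (meson fmeasurableI2)
    thus ?thesis using fmeasurableD2 by (metis infinity_ennreal_def)
  qed
  define I where "I = (LINT x:\<Omega>|lebesgue. \<bar>w x\<bar> powr p)"
  define mD where "mD = measure lebesgue D"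
  have ID: "(LINT x:D|lebesgue. \<bar>w x\<bar> powr p) \<le> I"
    unfolding I_def by (rule set_integral_mono_set_nonneg[OF i2O D]) simp
  have I0: "0 \<le> I"
  proof -
    have "0 \<le> (LINT x:D|lebesgue. \<bar>w x\<bar> powr p)"
      unfolding set_lebesgue_integral_def by (rule integral_nonneg_AE) (auto simp: indicator_def)
    thus ?thesis using ID by simp
  qed
  have key: "(LINT x:D|lebesgue. \<bar>w x\<bar>) \<le> (1 / (p * K powr (p - 1))) * I + (1 - 1/p) * K * mD" if K: "0 < K" for K
  proof -
    have ic: "set_integrable lebesgue D (\<lambda>x. (1 - 1/p) * K)"
      by (rule set_integrable_subset[OF cont_set_integrable[OF S continuous_on_const] D(1) DS])
    have "(LINT x:D|lebesgue. \<bar>w x\<bar>) \<le> (LINT x:D|lebesgue. (1 / (p * K powr (p - 1))) * \<bar>w x\<bar> powr p + (1 - 1/p) * K)"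
    proof (rule set_integral_mono[OF i1D])
      show "set_integrable lebesgue D (\<lambda>x. (1 / (p * K powr (p - 1))) * \<bar>w x\<bar> powr p + (1 - 1/p) * K)"
        by (rule set_integral_add(1)[OF set_integrable_mult_right[OF i2D] ic])
      fix x show "\<bar>w x\<bar> \<le> (1 / (p * K powr (p - 1))) * \<bar>w x\<bar> powr p + (1 - 1/p) * K"
        by (rule young_pt[OF p _ K]) simp
    qed
    also have "\<dots> = (1 / (p * K powr (p - 1))) * (LINT x:D|lebesgue. \<bar>w x\<bar> powr p) + (1 - 1/p) * K * mD"
    proof -
      have "(LINT x:D|lebesgue. (1 / (p * K powr (p - 1))) * \<bar>w x\<bar> powr p + (1 - 1/p) * K)
          = (LINT x:D|lebesgue. (1 / (p * K powr (p - 1))) * \<bar>w x\<bar> powr p) + (LINT x:D|lebesgue. (1 - 1/p) * K)"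
        by (rule set_integral_add(2)[OF set_integrable_mult_right[OF i2D] ic])
      moreover have "(LINT x:D|lebesgue. (1 - 1/p) * K) = mD * ((1 - 1/p) * K)"
        unfolding mD_def using set_integral_const[OF D(1) Dfin, of "(1 - 1/p) * K"] by simp
      ultimately show ?thesis by (simp only: set_integral_mult_right) (simp add: algebra_simps)
    qed
    also have "\<dots> \<le> (1 / (p * K powr (p - 1))) * I + (1 - 1/p) * K * mD"
      using ID K p by (intro add_right_mono mult_left_mono) auto
    finally show ?thesis .
  qed
  show ?thesis
  proof (cases "I = 0")
    case True
    have "(LINT x:D|lebesgue. \<bar>w x\<bar>) \<le> 0"
    proof (rule field_le_epsilon)
      fix e :: real assume e: "0 < e"
      have mD0: "0 < mD" using Dpos unfolding mD_def .
      have "(LINT x:D|lebesgue. \<bar>w x\<bar>) \<le> (1 - 1/p) * (e / mD) * mD"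
        using key[of "e / mD"] e mD0 True by simp
      also have "\<dots> = (1 - 1/p) * e" using mD0 by simp
      also have "\<dots> \<le> e" using e p by (simp add: mult_left_le_one_le)
      finally show "(LINT x:D|lebesgue. \<bar>w x\<bar>) \<le> 0 + e" by simp
    qed
    thus ?thesis using True unfolding I_def by simp
  next
    case False
    hence Ipos: "0 < I" using I0 by simp
    have mD0: "0 < mD" using Dpos unfolding mD_def .
    define Q where "Q = I / mD"
    have Q0: "0 < Q" unfolding Q_def using Ipos mD0 by simp
    define K where "K = Q powr (1/p)"
    have K0: "0 < K" unfolding K_def using Q0 by simp
    have "(1 / (p * K powr (p - 1))) * I = mD * K / p"
    proof -
      have "K powr (p - 1) = Q powr ((p - 1) / p)" unfolding K_def using Q0 by (simp add: powr_powr)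
      moreover have "I = mD * Q" unfolding Q_def using mD0 by simp
      moreover have "Q = Q powr ((p - 1) / p) * K"
      proof -
        have "Q powr ((p - 1) / p) * Q powr (1/p) = Q powr ((p - 1) / p + 1/p)" by (simp add: powr_add)
        also have "(p - 1) / p + 1/p = 1" using p by (simp add: field_simps)
        finally show ?thesis unfolding K_def using Q0 by simp
      qed
      ultimately show ?thesis using Q0 p by (simp add: field_simps)
    qed
    hence "(LINT x:D|lebesgue. \<bar>w x\<bar>) \<le> mD * K / p + (1 - 1/p) * K * mD" using key[OF K0] by simp
    also have "\<dots> = mD * K" using p by (simp add: field_simps)
    finally show ?thesis unfolding mD_def K_def Q_def I_def .
  qed
qed

lemma measure_ball_eq:
  assumes "0 \<le> r"
  shows "measure lebesgue (ball (x::'a::euclidean_space) r) = unit_ball_vol (DIM('a)) * r ^ DIM('a)"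
  using content_ball[OF assms, of x] by simp

lemma sig_le: "\<bar>\<sigma>\<bar> = 1 \<Longrightarrow> \<sigma> * (a::real) \<le> \<bar>a\<bar>"
proof -
  assume s: "\<bar>\<sigma>\<bar> = 1"
  have "\<sigma> * a \<le> \<bar>\<sigma> * a\<bar>" by (rule abs_ge_self)
  also have "\<dots> = \<bar>a\<bar>" using s by (simp add: abs_mult)
  finally show ?thesis .
qed

lemma frontier_not_in_open: "open S \<Longrightarrow> a \<in> frontier S \<Longrightarrow> a \<notin> S"
  by (simp add: frontier_def interior_open)

lemma mvp_point:
  fixes A :: "real^'n::finite \<Rightarrow> real^'n^'n" and \<Omega> :: "(real^'n) set" and v :: "real^'n \<Rightarrow> real" and \<sigma> :: real
  assumes mvp: "mean_value_property A \<Omega> c C"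
    and O: "open \<Omega>" "bounded \<Omega>" and fr: "frontier \<Omega> \<noteq> {}" and dpos: "0 < diameter \<Omega>"
    and vc: "continuous_on (closure \<Omega>) v"
    and sub: "weak_subsolution A \<Omega> (\<lambda>x. \<sigma> * v x)" and sig: "\<bar>\<sigma>\<bar> = 1"
    and x0: "ball x0 t \<subseteq> \<Omega>" "0 < t"
    and p: "1 \<le> p"
  shows "\<sigma> * (v x0 - avg \<Omega> v) \<le> (C * diameter \<Omega> / (2 * c * t)) powr (real CARD('n) / p) * nLp_norm p \<Omega> (\<lambda>x. v x - avg \<Omega> v)"
proof -
  have c: "0 < c" "c \<le> C" using mvp unfolding mean_value_property_def by auto
  have Cpos: "0 < C" using c by simp
  have x0O: "x0 \<in> \<Omega>" using x0 by auto
  obtain D :: "real \<Rightarrow> (real^'n) set" where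
    D1: "\<And>r. 0 < r \<and> r < infdist x0 (frontier \<Omega>) / C \<Longrightarrow> D r \<in> sets lebesgue \<and> ball x0 (c * r) \<subseteq> D r \<and> D r \<subseteq> ball x0 (C * r)" and
    D3: "\<And>w. continuous_on \<Omega> w \<and> weak_subsolution A \<Omega> w \<Longrightarrow>
          (\<forall>r \<rho>. 0 < r \<and> r < \<rho> \<and> \<rho> < infdist x0 (frontier \<Omega>) / C \<longrightarrow>
             w x0 \<le> avg (D r) w \<and> avg (D r) w \<le> avg (D \<rho>) w)"
    using mvp x0O unfolding mean_value_property_def by metis
  have inf: "t \<le> infdist x0 (frontier \<Omega>)"
    unfolding infdist_notempty[OF fr]
  proof (rule cINF_greatest[OF fr])
    fix a assume a: "a \<in> frontier \<Omega>"
    hence "a \<notin> \<Omega>" using frontier_not_in_open[OF O(1)] by blast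
    hence "a \<notin> ball x0 t" using x0 by blast
    thus "t \<le> dist x0 a" by simp
  qed
  define N where "N = real CARD('n)"
  have N0: "0 < N" unfolding N_def by simp
  define m where "m = avg \<Omega> v"
  define M where "M = nLp_norm p \<Omega> (\<lambda>x. v x - m)"
  define d where "d = diameter \<Omega>"
  define I where "I = (LINT x:\<Omega>|lebesgue. \<bar>v x - m\<bar> powr p)"
  define mO where "mO = measure lebesgue \<Omega>"
  define X where "X = C * d / (2 * c * t)"
  have X0: "0 < X" unfolding X_def d_def using Cpos c dpos x0 by simp
  have Om: "\<Omega> \<in> lmeasurable" using lmeasurable_open[OF O(2) O(1)] .
  have mO0: "0 < mO"
  proof -
    have "ball x0 t \<in> sets lebesgue" by simp
    hence "measure lebesgue (ball x0 t) \<le> mO" unfolding mO_def using x0(1) Om by (intro measure_mono_fmeasurable) auto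
    moreover have "0 < measure lborel (ball x0 t)" using content_ball_pos[OF x0(2)] .
    moreover have "measure lebesgue (ball x0 t) = measure lborel (ball x0 t)" by simp
    ultimately show ?thesis by linarith
  qed
  have I0: "0 \<le> I" unfolding I_def set_lebesgue_integral_def by (rule integral_nonneg_AE) (auto simp: indicator_def)
  have M_eq: "M = (I / mO) powr (1/p)" unfolding M_def nLp_norm_def I_def mO_def m_def ..
  have iso: "mO \<le> unit_ball_vol N * (d / 2) ^ CARD('n)"
    using isodiametric[OF O(1) O(2)] unfolding mO_def d_def N_def by simp
  have cl: "compact (closure \<Omega>)" using O(2) by (simp add: compact_closure)
  have "q * (\<sigma> * (v x0 - m)) \<le> X powr (N / p) * M" if q: "0 < q" "q < 1" for q
  proof -
    define r where "r = q powr (p / N) * t / C"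
    have qpow: "0 < q powr (p / N)" "q powr (p / N) < 1"
      using q p N0 powr_less_mono2[of "p / N" q 1] by auto
    have r0: "0 < r" unfolding r_def using qpow x0 Cpos by simp
    have Cr: "C * r = q powr (p / N) * t" unfolding r_def using Cpos by simp
    have Crt: "C * r < t" unfolding Cr using qpow x0 by simp
    have rinf: "r < infdist x0 (frontier \<Omega>) / C" using Crt inf Cpos by (simp add: field_simps)
    define \<rho> where "\<rho> = (r + infdist x0 (frontier \<Omega>) / C) / 2"
    have rho: "r < \<rho>" "\<rho> < infdist x0 (frontier \<Omega>) / C" unfolding \<rho>_def using rinf by (simp_all add: field_simps)
    have Dr: "D r \<in> sets lebesgue" "ball x0 (c * r) \<subseteq> D r" "D r \<subseteq> ball x0 (C * r)" using D1[of r] r0 rinf by auto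
    have "ball x0 (C * r) \<subseteq> ball x0 t" by (rule subset_ball) (use Crt in simp)
    hence DO: "D r \<subseteq> \<Omega>" using Dr(3) x0(1) by blast
    have DrC: "D r \<subseteq> closure \<Omega>" using DO closure_subset by blast
    have DrM: "D r \<in> lmeasurable" using Dr(1) DO Om by (meson fmeasurableI2)
    have cont: "continuous_on \<Omega> (\<lambda>x. \<sigma> * v x)"
      using vc closure_subset by (intro continuous_intros) (rule continuous_on_subset)
    have mv: "\<sigma> * v x0 \<le> avg (D r) (\<lambda>x. \<sigma> * v x)"
      using D3[OF conjI[OF cont sub]] r0 rho by blast
    define mD where "mD = measure lebesgue (D r)"
    have mDball: "unit_ball_vol N * (c * r) ^ CARD('n) \<le> mD"
    proof -
      have "measure lebesgue (ball x0 (c * r)) \<le> mD" unfolding mD_def using Dr(2) DrM by (intro measure_mono_fmeasurable) auto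
      thus ?thesis using measure_ball_eq[of "c * r" x0] c r0 unfolding N_def by simp
    qed
    have ubv: "0 < unit_ball_vol N" using N0 by simp
    have "0 < unit_ball_vol N * (c * r) ^ CARD('n)" using ubv c r0 by simp
    hence mD0: "0 < mD" using mDball by linarith
    have ivD: "set_integrable lebesgue (D r) v"
      by (rule set_integrable_subset[OF cont_set_integrable[OF cl vc] Dr(1) DrC])
    have "continuous_on (closure \<Omega>) (\<lambda>x. \<sigma> * (v x - m))" using vc by (intro continuous_intros)
    hence ivmD: "set_integrable lebesgue (D r) (\<lambda>x. \<sigma> * (v x - m))"
      by (rule set_integrable_subset[OF cont_set_integrable[OF cl] Dr(1) DrC])
    have "continuous_on (closure \<Omega>) (\<lambda>x. \<bar>v x - m\<bar>)" using vc by (intro continuous_intros)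
    hence ivaD: "set_integrable lebesgue (D r) (\<lambda>x. \<bar>v x - m\<bar>)"
      by (rule set_integrable_subset[OF cont_set_integrable[OF cl] Dr(1) DrC])
    have ivcD: "set_integrable lebesgue (D r) (\<lambda>x. m)"
      by (rule set_integrable_subset[OF cont_set_integrable[OF cl continuous_on_const] Dr(1) DrC])
    have Dfin: "emeasure lebesgue (D r) \<noteq> \<infinity>" using fmeasurableD2[OF DrM] by (metis infinity_ennreal_def)
    have step1: "\<sigma> * (v x0 - m) \<le> (LINT x:D r|lebesgue. \<sigma> * (v x - m)) / mD"
    proof -
      have "(LINT x:D r|lebesgue. \<sigma> * (v x - m)) = \<sigma> * (LINT x:D r|lebesgue. v x) - \<sigma> * m * mD"
      proof -
        have "(LINT x:D r|lebesgue. \<sigma> * (v x - m)) = \<sigma> * (LINT x:D r|lebesgue. v x - m)" by simp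
        also have "(LINT x:D r|lebesgue. v x - m) = (LINT x:D r|lebesgue. v x) - (LINT x:D r|lebesgue. m)"
          by (rule set_integral_diff(2)[OF ivD ivcD])
        also have "(LINT x:D r|lebesgue. m) = mD * m" unfolding mD_def using set_integral_const[OF Dr(1) Dfin, of m] by simp
        finally show ?thesis by (simp add: algebra_simps)
      qed
      hence e1: "(LINT x:D r|lebesgue. \<sigma> * (v x - m)) / mD = \<sigma> * (LINT x:D r|lebesgue. v x) / mD - \<sigma> * m"
        using mD0 by (simp add: diff_divide_distrib)
      have e2: "avg (D r) (\<lambda>x. \<sigma> * v x) = \<sigma> * (LINT x:D r|lebesgue. v x) / mD" unfolding avg_def mD_def by simp
      have "\<sigma> * (v x0 - m) = \<sigma> * v x0 - \<sigma> * m" by (simp add: algebra_simps)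
      thus ?thesis using mv e1 e2 by linarith
    qed
    have step2: "(LINT x:D r|lebesgue. \<sigma> * (v x - m)) \<le> (LINT x:D r|lebesgue. \<bar>v x - m\<bar>)"
      by (rule set_integral_mono[OF ivmD ivaD]) (rule sig_le[OF sig])
    have step3: "(LINT x:D r|lebesgue. \<bar>v x - m\<bar>) \<le> mD * (I / mD) powr (1/p)"
      unfolding mD_def I_def
      by (rule L1_Lp[OF p cl _ _ closure_subset Dr(1) DO]) (use vc O in \<open>auto intro!: continuous_intros simp: mD_def[symmetric] mD0\<close>)
    have "\<sigma> * (v x0 - m) \<le> (I / mD) powr (1/p)"
    proof -
      have "(LINT x:D r|lebesgue. \<sigma> * (v x - m)) / mD \<le> (mD * (I / mD) powr (1/p)) / mD"
        using step2 step3 mD0 by (intro divide_right_mono) auto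
      thus ?thesis using step1 mD0 by simp
    qed
    also have "(I / mD) powr (1/p) = (mO / mD) powr (1/p) * M"
    proof -
      have "I / mD = (mO / mD) * (I / mO)" using mO0 by simp
      hence "(I / mD) powr (1/p) = (mO / mD) powr (1/p) * (I / mO) powr (1/p)"
        using powr_mult[of "mO / mD" "I / mO" "1/p"] mO0 mD0 I0 by simp
      thus ?thesis unfolding M_eq .
    qed
    also have "\<dots> \<le> (X powr N / q powr p) powr (1/p) * M"
    proof (rule mult_right_mono)
      show "0 \<le> M" unfolding M_eq by simp
      have "mO / mD \<le> (unit_ball_vol N * (d / 2) ^ CARD('n)) / (unit_ball_vol N * (c * r) ^ CARD('n))"
        using iso mDball mD0 mO0 ubv c r0 by (intro frac_le) auto
      also have "\<dots> = ((d / 2) / (c * r)) ^ CARD('n)" using ubv by (simp add: power_divide)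
      also have "\<dots> = ((d / 2) / (c * r)) powr N" unfolding N_def using dpos c r0 d_def
        by (simp add: powr_realpow)
      also have "(d / 2) / (c * r) = X / q powr (p / N)" unfolding X_def r_def using c Cpos x0 qpow by (simp add: field_simps)
      also have "(X / q powr (p / N)) powr N = X powr N / q powr p"
        using X0 qpow N0 by (simp add: powr_divide powr_powr)
      finally have "mO / mD \<le> X powr N / q powr p" .
      thus "(mO / mD) powr (1/p) \<le> (X powr N / q powr p) powr (1/p)"
        using mO0 mD0 p by (intro powr_mono2) auto
    qed
    also have "(X powr N / q powr p) powr (1/p) = X powr (N / p) / q"
      using X0 q p by (simp add: powr_divide powr_powr)
    finally have "\<sigma> * (v x0 - m) \<le> X powr (N / p) / q * M" .
    hence "q * (\<sigma> * (v x0 - m)) \<le> q * (X powr (N / p) / q * M)" using q by (intro mult_left_mono) auto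
    thus ?thesis using q by simp
  qed
  hence "\<sigma> * (v x0 - m) \<le> X powr (N / p) * M" by (rule field_le_mult_one_interval)
  thus ?thesis unfolding X_def d_def N_def M_def m_def .
qed

lemma final_algebra:
  fixes \<Phi> \<alpha> p N c C Hs M s0 :: real
  assumes a: "0 < \<alpha>" and p: "1 \<le> p" and N: "0 < N" and c: "0 < c" "c \<le> C"
    and Hs: "0 \<le> Hs" and M: "0 \<le> M" and s0: "0 < s0"
    and T: "\<Phi> \<le> 2 powr \<alpha> * Hs"
    and P: "\<And>s. 0 < s \<Longrightarrow> s \<le> s0 \<Longrightarrow> \<Phi> \<le> 2 * (Hs * s powr \<alpha> + (C / c) powr (N / p) * M * s powr (- (N / p)))"
  shows "\<Phi> \<le> max (2 * (1 + \<alpha> * p / N)) ((2 / s0) powr \<alpha>)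
        * (N / (\<alpha> * p)) powr (\<alpha> * p / (N + \<alpha> * p))
        * (C / c) powr (\<alpha> * N / (N + \<alpha> * p))
        * Hs powr (N / (N + \<alpha> * p))
        * M powr (\<alpha> * p / (N + \<alpha> * p))"
proof -
  define X1 where "X1 = (N / (\<alpha> * p)) powr (\<alpha> * p / (N + \<alpha> * p))"
  define X2 where "X2 = (C / c) powr (\<alpha> * N / (N + \<alpha> * p))"
  define X3 where "X3 = Hs powr (N / (N + \<alpha> * p))"
  define X4 where "X4 = M powr (\<alpha> * p / (N + \<alpha> * p))"
  define K where "K = max (2 * (1 + \<alpha> * p / N)) ((2 / s0) powr \<alpha>)"
  have p0: "0 < p" using p by simp
  have ap: "0 < \<alpha> * p" using a p0 by simp
  have Cc: "0 < C / c" using c by simp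
  have "0 < 2 * (1 + \<alpha> * p / N)" using ap N by (simp add: add_pos_pos)
  hence K0: "0 < K" unfolding K_def by (simp add: less_max_iff_disj)
  have RHS0: "0 \<le> K * X1 * X2 * X3 * X4" unfolding X1_def X2_def X3_def X4_def using K0 by simp
  have goal: "\<Phi> \<le> K * X1 * X2 * X3 * X4"
  proof (cases "Hs = 0")
    case True
    thus ?thesis using T RHS0 by simp
  next
    case False
    hence Hs0: "0 < Hs" using Hs by simp
    show ?thesis
    proof (cases "M = 0")
      case True
      have "\<Phi> \<le> 0"
      proof (rule ccontr)
        assume "\<not> \<Phi> \<le> 0"
        hence Ph: "0 < \<Phi>" by simp
        define s where "s = min s0 ((\<Phi> / (4 * Hs)) powr (1/\<alpha>))"
        have s0': "0 < s" unfolding s_def using s0 Ph Hs0 by simp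
        have "s powr \<alpha> \<le> ((\<Phi> / (4 * Hs)) powr (1/\<alpha>)) powr \<alpha>"
          unfolding s_def using s0' a by (intro powr_mono2) (auto simp: s_def)
        also have "\<dots> = \<Phi> / (4 * Hs)" using a Ph Hs0 by (simp add: powr_powr)
        finally have "Hs * s powr \<alpha> \<le> Hs * (\<Phi> / (4 * Hs))" using Hs0 by (intro mult_left_mono) auto
        hence "2 * (Hs * s powr \<alpha>) \<le> \<Phi> / 2" using Hs0 by simp
        moreover have "\<Phi> \<le> 2 * (Hs * s powr \<alpha>)" using P[of s] s0' True by (simp add: s_def)
        ultimately show False using Ph by simp
      qed
      thus ?thesis using RHS0 by simp
    next
      case False
      hence M0: "0 < M" using M by simp
      define G where "G = X1 * X2 * X3 * X4"
      have G0: "0 < G" unfolding G_def X1_def X2_def X3_def X4_def using ap N Cc Hs0 M0 by (intro mult_pos_pos) auto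
      define st where "st = (G / Hs) powr (1 / \<alpha>)"
      have st0: "0 < st" unfolding st_def using G0 Hs0 by simp
      have K1: "Hs * st powr \<alpha> = G" unfolding st_def using G0 Hs0 a by (simp add: powr_powr)
      define B where "B = (C / c) powr (N / p) * M"
      have B0: "0 < B" unfolding B_def using Cc M0 by (intro mult_pos_pos) auto
      have K2: "B * st powr (- (N / p)) = (\<alpha> * p / N) * G"
      proof -
        define L1 where "L1 = ln (N / (\<alpha> * p))"
        define L2 where "L2 = ln (C / c)"
        define LH where "LH = ln Hs"
        define LM where "LM = ln M"
        have lnG: "ln G = (\<alpha> * p / (N + \<alpha> * p)) * L1 + (\<alpha> * N / (N + \<alpha> * p)) * L2 + (N / (N + \<alpha> * p)) * LH + (\<alpha> * p / (N + \<alpha> * p)) * LM"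
          unfolding G_def X1_def X2_def X3_def X4_def L1_def L2_def LH_def LM_def
          using ap N Cc Hs0 M0 a p0 c by (simp add: ln_mult ln_powr)
        have lnst: "ln st = (1 / \<alpha>) * (ln G - LH)" unfolding st_def LH_def using G0 Hs0 by (simp add: ln_powr ln_div)
        have l1: "ln (B * st powr (- (N / p))) = (N / p) * L2 + LM - (N / p) * ln st"
          unfolding B_def L2_def LM_def using Cc M0 st0 c by (simp add: ln_mult ln_powr)
        have l2: "ln ((\<alpha> * p / N) * G) = - L1 + ln G"
          unfolding L1_def using ap N G0 a p0 by (simp add: ln_mult ln_div)
        have Nap: "0 < N + \<alpha> * p" using N ap by simp
        have e: "(N + \<alpha>*p) * ln G = \<alpha>*p*L1 + \<alpha>*N*L2 + N*LH + \<alpha>*p*LM"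
        proof -
          have "ln G = (\<alpha>*p*L1 + \<alpha>*N*L2 + N*LH + \<alpha>*p*LM) / (N + \<alpha>*p)"
            unfolding lnG by (simp add: add_divide_distrib)
          thus ?thesis using Nap by simp
        qed
        have "\<alpha> * p * ((N / p) * L2 + LM - (N / p) * ((1 / \<alpha>) * (ln G - LH))) = \<alpha>*N*L2 + \<alpha>*p*LM - N*ln G + N*LH"
          using a p0 by (simp add: field_simps)
        also have "\<dots> = \<alpha> * p * (- L1 + ln G)" using e by (simp add: algebra_simps)
        finally have "(N / p) * L2 + LM - (N / p) * ((1 / \<alpha>) * (ln G - LH)) = - L1 + ln G" using a p0 by simp
        hence "(N / p) * L2 + LM - (N / p) * ln st = - L1 + ln G" unfolding lnst .
        hence "ln (B * st powr (- (N / p))) = ln ((\<alpha> * p / N) * G)" using l1 l2 by simp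
        thus ?thesis using B0 st0 G0 ap N by (simp add: ln_inj_iff)
      qed
      show ?thesis
      proof (cases "st \<le> s0")
        case True
        have "\<Phi> \<le> 2 * (Hs * st powr \<alpha> + B * st powr (- (N / p)))" using P[OF st0 True] unfolding B_def .
        also have "\<dots> = 2 * (1 + \<alpha> * p / N) * G" using K1 K2 by (simp add: algebra_simps)
        also have "\<dots> \<le> K * G" unfolding K_def using G0 by (intro mult_right_mono) auto
        finally show ?thesis unfolding G_def by (simp add: mult.assoc)
      next
        case False
        have "\<Phi> \<le> 2 powr \<alpha> * Hs" by (rule T)
        also have "\<dots> \<le> 2 powr \<alpha> * ((st / s0) powr \<alpha> * Hs)"
        proof -
          have "1 \<le> st / s0" using False s0 by simp
          hence "1 \<le> (st / s0) powr \<alpha>" using a by (simp add: ge_one_powr_ge_zero)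
          thus ?thesis using Hs0 by (simp add: mult_le_cancel_left1 mult_le_cancel_right1)
        qed
        also have "\<dots> = (2 / s0) powr \<alpha> * (Hs * st powr \<alpha>)" using s0 st0 by (simp add: powr_divide)
        also have "\<dots> = (2 / s0) powr \<alpha> * G" using K1 by simp
        also have "\<dots> \<le> K * G" unfolding K_def using G0 by (intro mult_right_mono) auto
        finally show ?thesis unfolding G_def by (simp add: mult.assoc)
      qed
    qed
  qed
  thus ?thesis unfolding K_def X1_def X2_def X3_def X4_def .
qed

lemma L2_loc_scale: "L2_loc \<Omega> f \<Longrightarrow> L2_loc \<Omega> (\<lambda>x. \<sigma> * f x)"
  unfolding L2_loc_def power_mult_distrib
  by (auto intro: set_integrable_mult_right)

lemma H1_scale:
  assumes "H1_loc_grad \<Omega> v g"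
  shows "H1_loc_grad \<Omega> (\<lambda>x. \<sigma> * v x) (\<lambda>x. \<sigma> *\<^sub>R g x)"
proof -
  have a1: "L2_loc \<Omega> v" and a2: "\<And>i. L2_loc \<Omega> (\<lambda>x. g x $ i)"
    and a3: "\<And>\<phi> i. test_fun \<Omega> \<phi> \<Longrightarrow> (LINT x:\<Omega>|lebesgue. v x * pd i \<phi> x) = - (LINT x:\<Omega>|lebesgue. g x $ i * \<phi> x)"
    using assms unfolding H1_loc_grad_def by auto
  have "L2_loc \<Omega> (\<lambda>x. \<sigma> * v x)" by (rule L2_loc_scale[OF a1])
  moreover have "L2_loc \<Omega> (\<lambda>x. (\<sigma> *\<^sub>R g x) $ i)" for i
    using L2_loc_scale[OF a2[of i], of \<sigma>] by simp
  moreover have "(LINT x:\<Omega>|lebesgue. \<sigma> * v x * pd i \<phi> x) = - (LINT x:\<Omega>|lebesgue. (\<sigma> *\<^sub>R g x) $ i * \<phi> x)"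
    if "test_fun \<Omega> \<phi>" for \<phi> i
  proof -
    have "(LINT x:\<Omega>|lebesgue. \<sigma> * v x * pd i \<phi> x) = \<sigma> * (LINT x:\<Omega>|lebesgue. v x * pd i \<phi> x)"
      by (simp add: mult.assoc)
    also have "\<dots> = - (\<sigma> * (LINT x:\<Omega>|lebesgue. g x $ i * \<phi> x))" using a3[OF that] by simp
    also have "\<sigma> * (LINT x:\<Omega>|lebesgue. g x $ i * \<phi> x) = (LINT x:\<Omega>|lebesgue. (\<sigma> *\<^sub>R g x) $ i * \<phi> x)"
      by (simp add: mult.assoc)
    finally show ?thesis .
  qed
  ultimately show ?thesis unfolding H1_loc_grad_def by blast
qed

lemma sol_sub:
  assumes "weak_solution A \<Omega> v"
  shows "weak_subsolution A \<Omega> (\<lambda>x. \<sigma> * v x)"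
proof -
  obtain g where g: "H1_loc_grad \<Omega> v g" "\<And>\<phi>. test_fun \<Omega> \<phi> \<Longrightarrow> (LINT x:\<Omega>|lebesgue. (A x *v g x) \<bullet> grad \<phi> x) = 0"
    using assms unfolding weak_solution_def by blast
  have "(LINT x:\<Omega>|lebesgue. (A x *v (\<sigma> *\<^sub>R g x)) \<bullet> grad \<phi> x) \<le> 0" if "test_fun \<Omega> \<phi>" for \<phi>
  proof -
    have "(LINT x:\<Omega>|lebesgue. (A x *v (\<sigma> *\<^sub>R g x)) \<bullet> grad \<phi> x) = \<sigma> * (LINT x:\<Omega>|lebesgue. (A x *v g x) \<bullet> grad \<phi> x)"
      by (simp add: matrix_vector_mult_scaleR)
    thus ?thesis using g(2)[OF that] by simp
  qed
  thus ?thesis unfolding weak_subsolution_def using H1_scale[OF g(1)] by blast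
qed

lemma sup_inf_le:
  fixes S :: "real set"
  assumes "S \<noteq> {}" "\<And>a b. a \<in> S \<Longrightarrow> b \<in> S \<Longrightarrow> a - b \<le> L"
  shows "Sup S - Inf S \<le> L"
proof -
  have "a \<le> Inf S + L" if a: "a \<in> S" for a
  proof -
    have "a - L \<le> Inf S" using assms(1) by (rule cInf_greatest) (use assms(2)[OF a] in force)
    thus ?thesis by simp
  qed
  hence "Sup S \<le> Inf S + L" using assms(1) by (intro cSup_least) auto
  thus ?thesis by simp
qed

theorem theorem2p3:
  fixes A :: "real^'n::finite \<Rightarrow> real^'n^'n"
    and \<Omega> :: "(real^'n) set"
    and v :: "real^'n \<Rightarrow> real"
    and p \<alpha> lam Lam c C r\<^sub>i :: real
  assumes "CARD('n) \<ge> 2"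
    and "elliptic_coeffs A lam Lam"
    and "mean_value_property A \<Omega> c C"
    and "1 \<le> p" and "0 < \<alpha>" and "\<alpha> \<le> 1"
    and "bounded_domain \<Omega>" and "C2_boundary \<Omega>"
    and "interior_sphere_radius \<Omega> r\<^sub>i"
    and "v \<in> Sigma_set A \<alpha> \<Omega>"
  shows "Sup (v ` frontier \<Omega>) - Inf (v ` frontier \<Omega>)
     \<le> max (2 * (1 + \<alpha> * p / real CARD('n))) ((diameter \<Omega> / r\<^sub>i) powr \<alpha>)
        * (real CARD('n) / (\<alpha> * p)) powr (\<alpha> * p / (real CARD('n) + \<alpha> * p))
        * (C / c) powr (\<alpha> * real CARD('n) / (real CARD('n) + \<alpha> * p))
        * holder_seminorm \<alpha> \<Omega> v powr (real CARD('n) / (real CARD('n) + \<alpha> * p))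
        * nLp_norm p \<Omega> (\<lambda>x. v x - avg \<Omega> v) powr (\<alpha> * p / (real CARD('n) + \<alpha> * p))"
proof -
  have mvp: "mean_value_property A \<Omega> c C" using assms(3) .
  have p: "1 \<le> p" and a: "0 < \<alpha>" using assms(4,5) .
  have O: "open \<Omega>" "connected \<Omega>" "bounded \<Omega>" "\<Omega> \<noteq> {}" using assms(7) unfolding bounded_domain_def by auto
  have hv: "holder_on \<alpha> (closure \<Omega>) v" and ws: "weak_solution A \<Omega> v" using assms(10) unfolding Sigma_set_def by auto
  have vc: "continuous_on (closure \<Omega>) v" using hv unfolding holder_on_def by blast
  obtain K0 where K0: "\<forall>x\<in>closure \<Omega>. \<forall>y\<in>closure \<Omega>. \<bar>v x - v y\<bar> \<le> K0 * dist x y powr \<alpha>"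
    using hv unfolding holder_on_def by blast
  have c: "0 < c" "c \<le> C" using mvp unfolding mean_value_property_def by auto
  have ri: "0 < r\<^sub>i" and ISC: "\<And>z. z \<in> frontier \<Omega> \<Longrightarrow> \<exists>y. ball y r\<^sub>i \<subseteq> \<Omega> \<and> closure (ball y r\<^sub>i) \<inter> frontier \<Omega> = {z}"
    using assms(9) unfolding interior_sphere_radius_def by auto
  have notU: "\<Omega> \<noteq> UNIV" using O(3) by auto
  have fr: "frontier \<Omega> \<noteq> {}" using frontier_not_empty[OF O(4) notU] .
  have frcl: "frontier \<Omega> \<subseteq> closure \<Omega>" by (simp add: frontier_def)
  obtain x1 where x1: "x1 \<in> \<Omega>" using O(4) by blast
  obtain e where e: "0 < e" "ball x1 e \<subseteq> \<Omega>" using openE[OF O(1) x1] by blast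
  obtain u :: "real^'n" where u: "norm u = e / 2" using vector_choose_size[of "e/2"] e by auto
  have x2: "x1 + u \<in> \<Omega>" using e u by (intro subsetD[OF e(2)]) (simp add: dist_norm)
  have dx: "dist x1 (x1 + u) = e / 2" using u by (simp add: dist_norm)
  define d where "d = diameter \<Omega>"
  have dpos: "0 < d"
  proof -
    have "dist x1 (x1 + u) \<le> d" unfolding d_def using diameter_bounded_bound[OF O(3) x1 x2] .
    thus ?thesis using dx e by simp
  qed
  define N where "N = real CARD('n)"
  have N0: "0 < N" unfolding N_def by simp
  define Hs where "Hs = holder_seminorm \<alpha> \<Omega> v"
  define m where "m = avg \<Omega> v"
  define M where "M = nLp_norm p \<Omega> (\<lambda>x. v x - avg \<Omega> v)"
  have M0: "0 \<le> M" unfolding M_def nLp_norm_def by simp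
  define HS where "HS = {(diameter \<Omega> / 2) powr \<alpha> * \<bar>v x1 - v x2\<bar> / dist x1 x2 powr \<alpha> | x1 x2.
      x1 \<in> closure \<Omega> \<and> x2 \<in> closure \<Omega> \<and> x1 \<noteq> x2}"
  have Hs_def': "Hs = Sup HS" unfolding Hs_def HS_def holder_seminorm_def ..
  have HSbdd: "bdd_above HS"
  proof (rule bdd_aboveI)
    fix y assume "y \<in> HS"
    then obtain y1 y2 where yy: "y1 \<in> closure \<Omega>" "y2 \<in> closure \<Omega>" "y1 \<noteq> y2"
      "y = (diameter \<Omega> / 2) powr \<alpha> * \<bar>v y1 - v y2\<bar> / dist y1 y2 powr \<alpha>" unfolding HS_def by blast
    have dp: "0 < dist y1 y2 powr \<alpha>" using yy(3) by simp
    have "\<bar>v y1 - v y2\<bar> / dist y1 y2 powr \<alpha> \<le> K0" using K0 yy(1,2) dp by (simp add: divide_le_eq)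
    hence "(diameter \<Omega> / 2) powr \<alpha> * (\<bar>v y1 - v y2\<bar> / dist y1 y2 powr \<alpha>) \<le> (diameter \<Omega> / 2) powr \<alpha> * K0"
      by (intro mult_left_mono) auto
    thus "y \<le> (diameter \<Omega> / 2) powr \<alpha> * K0" using yy(4) by simp
  qed
  have HSne: "(diameter \<Omega> / 2) powr \<alpha> * \<bar>v x1 - v (x1 + u)\<bar> / dist x1 (x1 + u) powr \<alpha> \<in> HS"
    unfolding HS_def using x1 x2 closure_subset dx e by fastforce
  have Hs0: "0 \<le> Hs"
    unfolding Hs_def' using cSup_upper[OF HSne HSbdd] by (smt (verit) divide_nonneg_nonneg mult_nonneg_nonneg abs_ge_zero powr_ge_zero)
  have hb: "\<bar>v x - v y\<bar> \<le> Hs * (2 * dist x y / d) powr \<alpha>" if xy: "x \<in> closure \<Omega>" "y \<in> closure \<Omega>" for x y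
  proof (cases "x = y")
    case True thus ?thesis using Hs0 by simp
  next
    case False
    have dp: "0 < dist x y powr \<alpha>" using False by simp
    have "(d / 2) powr \<alpha> * \<bar>v x - v y\<bar> / dist x y powr \<alpha> \<le> Hs"
      unfolding Hs_def' d_def by (rule cSup_upper[OF _ HSbdd]) (unfold HS_def, use xy False in blast)
    hence "(d / 2) powr \<alpha> * \<bar>v x - v y\<bar> \<le> Hs * dist x y powr \<alpha>" using dp by (simp add: divide_le_eq)
    moreover have "0 < (d / 2) powr \<alpha>" using dpos by simp
    ultimately have "\<bar>v x - v y\<bar> \<le> Hs * dist x y powr \<alpha> / (d / 2) powr \<alpha>" by (simp add: le_divide_eq mult.commute)
    also have "\<dots> = Hs * (dist x y / (d / 2)) powr \<alpha>"
      using powr_divide[of "dist x y" "d / 2" \<alpha>] dpos by simp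
    also have "dist x y / (d / 2) = 2 * dist x y / d" by simp
    finally show ?thesis .
  qed
  have dcl: "diameter (closure \<Omega>) = d" unfolding d_def using diameter_closure[OF O(3)] .
  have bcl: "bounded (closure \<Omega>)" using O(3) by (rule bounded_closure)
  have T: "Sup (v ` frontier \<Omega>) - Inf (v ` frontier \<Omega>) \<le> 2 powr \<alpha> * Hs"
  proof (rule sup_inf_le)
    show "v ` frontier \<Omega> \<noteq> {}" using fr by simp
    fix a b assume "a \<in> v ` frontier \<Omega>" "b \<in> v ` frontier \<Omega>"
    then obtain z1 z2 where z: "z1 \<in> frontier \<Omega>" "z2 \<in> frontier \<Omega>" "a = v z1" "b = v z2" by blast
    have zc: "z1 \<in> closure \<Omega>" "z2 \<in> closure \<Omega>" using z frcl by auto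
    have "dist z1 z2 \<le> d" using diameter_bounded_bound[OF bcl zc] dcl by simp
    hence "2 * dist z1 z2 / d \<le> 2" using dpos by (simp add: divide_le_eq)
    hence "(2 * dist z1 z2 / d) powr \<alpha> \<le> 2 powr \<alpha>" using a dpos by (intro powr_mono2) auto
    hence "Hs * (2 * dist z1 z2 / d) powr \<alpha> \<le> Hs * 2 powr \<alpha>" using Hs0 by (intro mult_left_mono) auto
    moreover have "a - b \<le> \<bar>v z1 - v z2\<bar>" using z by simp
    ultimately show "a - b \<le> 2 powr \<alpha> * Hs" using hb[OF zc] by (simp add: mult.commute)
  qed
  define s0 where "s0 = 2 * r\<^sub>i / d"
  have s0pos: "0 < s0" unfolding s0_def using ri dpos by simp
  define B where "B = (C / c) powr (N / p) * M"
  have pp: "\<sigma> * (v z - m) \<le> Hs * s powr \<alpha> + B * s powr (- (N / p))"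
    if z: "z \<in> frontier \<Omega>" and sig: "\<bar>\<sigma>\<bar> = 1" and s: "0 < s" "s \<le> s0" for z \<sigma> s
  proof -
    define t where "t = s * d / 2"
    have t0: "0 < t" unfolding t_def using s dpos by simp
    have tri: "t \<le> r\<^sub>i" unfolding t_def using s(2) dpos unfolding s0_def by (simp add: field_simps)
    obtain y where y: "ball y r\<^sub>i \<subseteq> \<Omega>" "closure (ball y r\<^sub>i) \<inter> frontier \<Omega> = {z}" using ISC[OF z] by blast
    have zc: "z \<in> cball y r\<^sub>i" using y(2) closure_ball[OF ri] by blast
    have zO: "z \<notin> \<Omega>" using frontier_not_in_open[OF O(1) z] .
    have dyz: "dist y z = r\<^sub>i"
    proof -
      have "\<not> dist y z < r\<^sub>i" using zO y(1) by auto
      thus ?thesis using zc by simp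
    qed
    define x0 where "x0 = z + (t / r\<^sub>i) *\<^sub>R (y - z)"
    have nyz: "norm (y - z) = r\<^sub>i" using dyz by (simp add: dist_norm)
    have dzx: "dist z x0 = t"
    proof -
      have "dist z x0 = norm ((t / r\<^sub>i) *\<^sub>R (y - z))" unfolding x0_def by (simp add: dist_norm)
      also have "\<dots> = t / r\<^sub>i * r\<^sub>i" using nyz t0 ri by simp
      finally show ?thesis using ri by simp
    qed
    have dyx: "dist y x0 = r\<^sub>i - t"
    proof -
      have "y - x0 = (1 - t / r\<^sub>i) *\<^sub>R (y - z)" unfolding x0_def by (simp add: algebra_simps)
      hence "dist y x0 = \<bar>1 - t / r\<^sub>i\<bar> * r\<^sub>i" using nyz by (simp add: dist_norm)
      also have "\<bar>1 - t / r\<^sub>i\<bar> = 1 - t / r\<^sub>i" using tri ri by simp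
      finally show ?thesis using ri by (simp add: algebra_simps)
    qed
    have bsub: "ball x0 t \<subseteq> \<Omega>"
    proof
      fix w assume "w \<in> ball x0 t"
      hence "dist x0 w < t" by simp
      hence "dist y w < r\<^sub>i" using dist_triangle[of y w x0] dyx by simp
      thus "w \<in> \<Omega>" using y(1) by auto
    qed
    have x0O: "x0 \<in> \<Omega>" using bsub t0 by auto
    have mv: "\<sigma> * (v x0 - avg \<Omega> v) \<le> (C * diameter \<Omega> / (2 * c * t)) powr (real CARD('n) / p) * nLp_norm p \<Omega> (\<lambda>x. v x - avg \<Omega> v)"
      by (rule mvp_point[OF mvp O(1) O(3) fr _ vc sol_sub[OF ws] sig bsub t0 p]) (use dpos d_def in simp)
    have eqX: "(C * diameter \<Omega> / (2 * c * t)) powr (real CARD('n) / p) = (C / c) powr (N / p) * s powr (- (N / p))"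
    proof -
      have "C * diameter \<Omega> / (2 * c * t) = (C / c) / s" unfolding t_def d_def[symmetric] using dpos c s by (simp add: field_simps)
      moreover have "((C / c) / s) powr (N / p) = (C / c) powr (N / p) * s powr (- (N / p))"
      proof -
        have "((C / c) / s) powr (N / p) = (C / c) powr (N / p) / s powr (N / p)"
          using c s by (intro powr_divide)
        also have "\<dots> = (C / c) powr (N / p) * s powr (- (N / p))"
          by (simp add: powr_minus divide_inverse)
        finally show ?thesis .
      qed
      ultimately show ?thesis unfolding N_def by simp
    qed
    have zcl: "z \<in> closure \<Omega>" using z frcl by auto
    have "\<sigma> * (v z - v x0) \<le> \<bar>v z - v x0\<bar>" by (rule sig_le[OF sig])
    also have "\<dots> \<le> Hs * (2 * dist z x0 / d) powr \<alpha>" using hb[OF zcl] x0O closure_subset by blast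
    also have "2 * dist z x0 / d = s" unfolding dzx t_def using dpos by simp
    finally have h1: "\<sigma> * (v z - v x0) \<le> Hs * s powr \<alpha>" .
    have "\<sigma> * (v z - m) = \<sigma> * (v z - v x0) + \<sigma> * (v x0 - avg \<Omega> v)" unfolding m_def by (simp add: algebra_simps)
    also have "\<dots> \<le> Hs * s powr \<alpha> + B * s powr (- (N / p))"
      using h1 mv unfolding eqX B_def M_def by (simp add: mult.commute mult.left_commute)
    finally show ?thesis .
  qed
  have P: "Sup (v ` frontier \<Omega>) - Inf (v ` frontier \<Omega>) \<le> 2 * (Hs * s powr \<alpha> + (C / c) powr (N / p) * M * s powr (- (N / p)))"
    if s: "0 < s" "s \<le> s0" for s
  proof (rule sup_inf_le)
    show "v ` frontier \<Omega> \<noteq> {}" using fr by simp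
    fix a b assume "a \<in> v ` frontier \<Omega>" "b \<in> v ` frontier \<Omega>"
    then obtain z1 z2 where z: "z1 \<in> frontier \<Omega>" "z2 \<in> frontier \<Omega>" "a = v z1" "b = v z2" by blast
    have "1 * (v z1 - m) \<le> Hs * s powr \<alpha> + B * s powr (- (N / p))" by (rule pp[OF z(1) _ s]) simp
    moreover have "(-1) * (v z2 - m) \<le> Hs * s powr \<alpha> + B * s powr (- (N / p))" by (rule pp[OF z(2) _ s]) simp
    ultimately show "a - b \<le> 2 * (Hs * s powr \<alpha> + (C / c) powr (N / p) * M * s powr (- (N / p)))"
      using z unfolding B_def by simp
  qed
  have fa: "Sup (v ` frontier \<Omega>) - Inf (v ` frontier \<Omega>) \<le> max (2 * (1 + \<alpha> * p / N)) ((2 / s0) powr \<alpha>)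
        * (N / (\<alpha> * p)) powr (\<alpha> * p / (N + \<alpha> * p))
        * (C / c) powr (\<alpha> * N / (N + \<alpha> * p))
        * Hs powr (N / (N + \<alpha> * p))
        * M powr (\<alpha> * p / (N + \<alpha> * p))"
    by (rule final_algebra[OF a p N0 c Hs0 M0 s0pos T P])
  have "2 / s0 = diameter \<Omega> / r\<^sub>i" unfolding s0_def d_def using ri by simp
  thus ?thesis using fa unfolding N_def Hs_def M_def by simp
qed

end
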